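(* Let $\rho\in(0,\infty)$ and $d=d(L)$ with $dL\to\theta\in[0,\infty)$. For every $H\in\mathcal D(\mathcal L_\theta)$, $$\lim_{N/L\to\rho}\ \sup_{\eta\in\Omega_{L,N}}\Big|\mathfrak L_{L,N}\big(H\circ\mu_{L,N}^{(\cdot)}\big)(\eta)-(\mathcal L_\theta H)(\mu_{L,N}^{(\eta)})\Big|=0.$$
   Context: Inclusion process: $\Omega_{L,N}=\{\eta\in\mathbb N_0^L:\sum_x\eta_x=N\}$, $\mathfrak L_{L,N}f(\eta)=\sum_{x\ne y}\eta_x(d+\eta_y)[f(\eta^{x,y})-f(\eta)]$, $\eta^{x,y}=\eta-e^x+e^y$; "$N/L\to\rho$" means $N,L\to\infty$ with $N/L\to\rho$. $\mu^{(\eta)}_{L,N}=\sum_x\frac{\eta_x}N\delta_{\eta_x/N}$. $\overline\nabla=\{p\in[0,1]^{\mathbb N}:p_1\ge p_2\ge\dots,\sum p_i\le1\}$, $\mu^{(p)}=(1-\|p\|_1)\delta_0+\sum_ip_i\delta_{p_i}$, $E=\{\mu^{(p)}:p\in\overline\nabla\}$ (note $\mu^{(\eta)}_{L,N}\in E$). $Bh=(zh)'$; $A_\theta h(z)=z(1-z)h''+(2-(2+\theta)z)h'+\theta(h(0)-h(z))$; $\mathcal D(\mathcal L_\theta)$ = subalgebra of $C(E)$ generated by $\mu\mapsto\mu(h)$, $h\in C^3([0,1])$, with $\mathcal L_\theta\prod_{k=1}^n\mu(h_k)=2\sum_{k<l}(\mu(Bh_kBh_l)-\mu(Bh_k)\mu(Bh_l))\prod_{j\ne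 k,l}\mu(h_j)+\sum_k\mu(A_\theta h_k)\prod_{j\ne k}\mu(h_j)$, extended linearly. *)

theory Defs
  imports "HOL-Analysis.Analysis"
begin

text \<open>Configurations: sites are 0..L-1; eta is extended by 0 outside the torus.\<close>
definition Omega :: "nat \<Rightarrow> nat \<Rightarrow> (nat \<Rightarrow> nat) set" where
  "Omega L N = {eta. (\<forall>x\<ge>L. eta x = 0) \<and> (\<Sum>x<L. eta x) = N}"

definition jump :: "(nat \<Rightarrow> nat) \<Rightarrow> nat \<Rightarrow> nat \<Rightarrow> (nat \<Rightarrow> nat)" where
  "jump eta x y = (eta(x := eta x - 1))(y := (eta(x := eta x - 1)) y + 1)"

definition gen :: "nat \<Rightarrow> real \<Rightarrow> ((nat \<Rightarrow> nat) \<Rightarrow> real) \<Rightarrow> (nat \<Rightarrow> nat) \<Rightarrow> real" where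
  "gen L d f eta = (\<Sum>x<L. \<Sum>y<L. if x \<noteq> y then
      real (eta x) * (d + real (eta y)) * (f (jump eta x y) - f eta) else 0)"

text \<open>Measures on [0,1] are represented by their integration functionals h \<mapsto> mu(h).
  The empirical measure mu^(eta)_{L,N} = sum_x eta_x/N delta_{eta_x/N}.\<close>
definition emp :: "nat \<Rightarrow> nat \<Rightarrow> (nat \<Rightarrow> nat) \<Rightarrow> (real \<Rightarrow> real) \<Rightarrow> real" where
  "emp L N eta h = (\<Sum>x<L. real (eta x) / real N * h (real (eta x) / real N))"

definition D01 :: "(real \<Rightarrow> real) \<Rightarrow> real \<Rightarrow> real" where
  "D01 h x = vector_derivative h (at x within {0..1})"

definition C3_01 :: "(real \<Rightarrow> real) \<Rightarrow> bool" where
  "C3_01 h \<longleftrightarrow> (\<exists>h1 h2 h3.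
     (\<forall>x\<in>{0..1}. (h has_real_derivative h1 x) (at x within {0..1}) \<and>
                  (h1 has_real_derivative h2 x) (at x within {0..1}) \<and>
                  (h2 has_real_derivative h3 x) (at x within {0..1})) \<and>
     continuous_on {0..1} h3)"

definition Bop :: "(real \<Rightarrow> real) \<Rightarrow> real \<Rightarrow> real" where
  "Bop h z = h z + z * D01 h z"

definition Aop :: "real \<Rightarrow> (real \<Rightarrow> real) \<Rightarrow> real \<Rightarrow> real" where
  "Aop \<theta> h z = z * (1 - z) * D01 (D01 h) z + (2 - (2 + \<theta>) * z) * D01 h z
               + \<theta> * (h 0 - h z)"

text \<open>An element of D(L_theta) given by a representation as a finite linear combination
  of products mu(h_1)...mu(h_n): a list of pairs (coefficient, [h_1,...,h_n]).\<close>
definition Hrep :: "(real \<times> (real \<Rightarrow> real) list) list \<Rightarrow> ((real \<Rightarrow> real) \<Rightarrow> real) \<Rightarrow> real" where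
  "Hrep R mu = (\<Sum>(c, hs) \<leftarrow> R. c * prod_list (map mu hs))"

definition Lprod :: "real \<Rightarrow> (real \<Rightarrow> real) list \<Rightarrow> ((real \<Rightarrow> real) \<Rightarrow> real) \<Rightarrow> real" where
  "Lprod \<theta> hs mu =
     2 * (\<Sum>k<length hs. \<Sum>l<length hs. if k < l then
           (mu (\<lambda>z. Bop (hs!k) z * Bop (hs!l) z) - mu (Bop (hs!k)) * mu (Bop (hs!l)))
           * (\<Prod>j\<in>{..<length hs} - {k, l}. mu (hs!j)) else 0)
     + (\<Sum>k<length hs. mu (Aop \<theta> (hs!k)) * (\<Prod>j\<in>{..<length hs} - {k}. mu (hs!j)))"

definition Ltheta :: "real \<Rightarrow> (real \<times> (real \<Rightarrow> real) list) list \<Rightarrow> ((real \<Rightarrow> real) \<Rightarrow> real) \<Rightarrow> real" where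
  "Ltheta \<theta> R mu = (\<Sum>(c, hs) \<leftarrow> R. c * Lprod \<theta> hs mu)"

end

theory Submission
  imports Defs
begin


lemma lipb:
  fixes f f' :: "real \<Rightarrow> real"
  assumes "\<forall>x\<in>{0..1}. (f has_real_derivative f' x) (at x within {0..1})"
    "\<forall>x\<in>{0..1}. \<bar>f' x\<bar> \<le> M" "a \<in> {0..1}" "b \<in> {0..1}"
  shows "\<bar>f b - f a\<bar> \<le> M * \<bar>b - a\<bar>"
  using field_differentiable_bound[of "{0..1}" f f' M b a] assms by auto

lemma tay1:
  fixes f f' f'' :: "real \<Rightarrow> real"
  assumes d1: "\<forall>x\<in>{0..1}. (f has_real_derivative f' x) (at x within {0..1})"
    and d2: "\<forall>x\<in>{0..1}. (f' has_real_derivative f'' x) (at x within {0..1})"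
    and bd: "\<forall>x\<in>{0..1}. \<bar>f'' x\<bar> \<le> M" and ab: "a \<in> {0..1}" "b \<in> {0..1}"
  shows "\<bar>f b - f a - (b - a) * f' a\<bar> \<le> M * (b - a)^2"
proof -
  define S where "S = {min a b..max a b}"
  have SS: "S \<subseteq> {0..1}" using ab by (auto simp: S_def)
  have cS: "convex S" by (simp add: S_def)
  have der: "((\<lambda>s. f s - s * f' a) has_real_derivative (f' s - f' a)) (at s within S)" if "s \<in> S" for s
  proof -
    have "(f has_real_derivative f' s) (at s within S)"
      using d1 SS that by (meson DERIV_subset subsetD)
    then show ?thesis by (auto intro!: derivative_eq_intros)
  qed
  have bnd: "norm (f' s - f' a) \<le> M * \<bar>b - a\<bar>" if "s \<in> S" for s
  proof -
    have "\<bar>f' s - f' a\<bar> \<le> M * \<bar>s - a\<bar>" using lipb[OF d2 bd ab(1)] SS that by auto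
    also have "\<dots> \<le> M * \<bar>b - a\<bar>"
    proof -
      have "M \<ge> 0" using bd ab by fastforce
      moreover have "\<bar>s - a\<bar> \<le> \<bar>b - a\<bar>" using that by (auto simp: S_def)
      ultimately show ?thesis by (simp add: mult_left_mono)
    qed
    finally show ?thesis by simp
  qed
  have "norm ((f b - b * f' a) - (f a - a * f' a)) \<le> M * \<bar>b - a\<bar> * norm (b - a)"
    by (rule field_differentiable_bound[OF cS der bnd]) (auto simp: S_def)
  then show ?thesis by (simp add: algebra_simps power2_eq_square abs_mult)
qed

lemma tay2:
  fixes f f' f'' f''' :: "real \<Rightarrow> real"
  assumes d1: "\<forall>x\<in>{0..1}. (f has_real_derivative f' x) (at x within {0..1})"
    and d2: "\<forall>x\<in>{0..1}. (f' has_real_derivative f'' x) (at x within {0..1})"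
    and d3: "\<forall>x\<in>{0..1}. (f'' has_real_derivative f''' x) (at x within {0..1})"
    and bd: "\<forall>x\<in>{0..1}. \<bar>f''' x\<bar> \<le> M" and ab: "a \<in> {0..1}" "b \<in> {0..1}"
  shows "\<bar>f b - f a - (b - a) * f' a - (b - a)^2 / 2 * f'' a\<bar> \<le> M * \<bar>b - a\<bar>^3"
proof -
  define S where "S = {min a b..max a b}"
  have SS: "S \<subseteq> {0..1}" using ab by (auto simp: S_def)
  have cS: "convex S" by (simp add: S_def)
  have der: "((\<lambda>s. f s - s * f' a - (s - a)^2 / 2 * f'' a) has_real_derivative
      (f' s - f' a - (s - a) * f'' a)) (at s within S)" if "s \<in> S" for s
  proof -
    have "(f has_real_derivative f' s) (at s within S)"
      using d1 SS that by (meson DERIV_subset subsetD)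
    then show ?thesis by (auto intro!: derivative_eq_intros simp: field_simps)
  qed
  have bnd: "norm (f' s - f' a - (s - a) * f'' a) \<le> M * \<bar>b - a\<bar>^2" if "s \<in> S" for s
  proof -
    have "\<bar>f' s - f' a - (s - a) * f'' a\<bar> \<le> M * (s - a)^2" using tay1[OF d2 d3 bd ab(1)] SS that by auto
    also have "\<dots> \<le> M * \<bar>b - a\<bar>^2"
    proof -
      have "M \<ge> 0" using bd ab by fastforce
      moreover have "\<bar>s - a\<bar> \<le> \<bar>b - a\<bar>" using that by (auto simp: S_def)
      ultimately show ?thesis
        by (metis abs_ge_zero mult_left_mono power2_abs power_mono)
    qed
    finally show ?thesis by simp
  qed
  have "norm ((f b - b * f' a - (b - a)^2 / 2 * f'' a) - (f a - a * f' a - (a - a)^2 / 2 * f'' a))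
      \<le> M * \<bar>b - a\<bar>^2 * norm (b - a)"
    by (rule field_differentiable_bound[OF cS der bnd]) (auto simp: S_def)
  then show ?thesis by (simp add: algebra_simps power3_eq_cube power2_eq_square abs_mult)
qed


definition der3 :: "(real \<Rightarrow> real) \<Rightarrow> (real \<Rightarrow> real) \<Rightarrow> (real \<Rightarrow> real) \<Rightarrow> (real \<Rightarrow> real) \<Rightarrow> bool" where
  "der3 G G1 G2 G3 \<longleftrightarrow> (\<forall>x\<in>{0..1}. (G has_real_derivative G1 x) (at x within {0..1}) \<and>
     (G1 has_real_derivative G2 x) (at x within {0..1}) \<and> (G2 has_real_derivative G3 x) (at x within {0..1}))"

definition bnd :: "real \<Rightarrow> (real \<Rightarrow> real) \<Rightarrow> (real \<Rightarrow> real) \<Rightarrow> (real \<Rightarrow> real) \<Rightarrow> (real \<Rightarrow> real) \<Rightarrow> bool" where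
  "bnd M G G1 G2 G3 \<longleftrightarrow> 1 \<le> M \<and> (\<forall>x\<in>{0..1}. \<bar>G x\<bar> \<le> M * x \<and> \<bar>G1 x\<bar> \<le> M \<and> \<bar>G2 x\<bar> \<le> M \<and> \<bar>G3 x\<bar> \<le> M)"

lemma deq: "(f has_real_derivative a) F \<Longrightarrow> a = b \<Longrightarrow> (f has_real_derivative b) F"
  by simp

lemma bound01:
  fixes f :: "real \<Rightarrow> real"
  assumes "continuous_on {0..1::real} f" obtains B where "B \<ge> 0" "\<forall>x\<in>{0..1}. \<bar>f x\<bar> \<le> B"
  using continuous_on_compact_bound[of "{0..1}" f] assms by (metis compact_Icc real_norm_def)

lemma D01_eq:
  assumes "(h has_real_derivative h1) (at z within {0..1})" "z \<in> {0..1}"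
  shows "D01 h z = h1"
proof -
  have "(h has_vector_derivative h1) (at z within cbox 0 1)"
    using assms by (simp add: has_real_derivative_iff_has_vector_derivative)
  then show ?thesis unfolding D01_def using vector_derivative_within_cbox[of 0 1 z h h1] assms
    by simp
qed

lemma C3_good:
  assumes "C3_01 h"
  shows "\<exists>G1 G2 G3 M. der3 (\<lambda>v. v * h v) G1 G2 G3 \<and> bnd M (\<lambda>v. v * h v) G1 G2 G3 \<and>
     (\<forall>z\<in>{0..1}. Bop h z = G1 z \<and>
        z * Aop \<theta> h z = z * (1 - z) * G2 z - \<theta> * z * G1 z + \<theta> * z * G1 0)"
proof -
  obtain h1 h2 h3 where hd: "\<forall>x\<in>{0..1}. (h has_real_derivative h1 x) (at x within {0..1}) \<and>
                  (h1 has_real_derivative h2 x) (at x within {0..1}) \<and>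
                  (h2 has_real_derivative h3 x) (at x within {0..1})" and c3: "continuous_on {0..1} h3"
    using assms unfolding C3_01_def by blast
  have c0: "continuous_on {0..1} h" using hd
    by (auto simp: continuous_on_eq_continuous_within intro: DERIV_continuous)
  have c1: "continuous_on {0..1} h1" using hd
    by (auto simp: continuous_on_eq_continuous_within intro: DERIV_continuous)
  have c2: "continuous_on {0..1} h2" using hd
    by (auto simp: continuous_on_eq_continuous_within intro: DERIV_continuous)
  obtain B0 where B0: "B0 \<ge> 0" "\<forall>x\<in>{0..1}. \<bar>h x\<bar> \<le> B0" using bound01[OF c0] by blast
  obtain B1 where B1: "B1 \<ge> 0" "\<forall>x\<in>{0..1}. \<bar>h1 x\<bar> \<le> B1" using bound01[OF c1] by blast
  obtain B2 where B2: "B2 \<ge> 0" "\<forall>x\<in>{0..1}. \<bar>h2 x\<bar> \<le> B2" using bound01[OF c2] by blast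
  obtain B3 where B3: "B3 \<ge> 0" "\<forall>x\<in>{0..1}. \<bar>h3 x\<bar> \<le> B3" using bound01[OF c3] by blast
  define G1 where "G1 v = h v + v * h1 v" for v
  define G2 where "G2 v = 2 * h1 v + v * h2 v" for v
  define G3 where "G3 v = 3 * h2 v + v * h3 v" for v
  define M where "M = 1 + B0 + 2 * B1 + 3 * B2 + B3"
  have "der3 (\<lambda>v. v * h v) G1 G2 G3"
    unfolding der3_def
  proof (intro ballI conjI)
    fix x :: real assume x: "x \<in> {0..1}"
    have a: "(h has_real_derivative h1 x) (at x within {0..1})"
      "(h1 has_real_derivative h2 x) (at x within {0..1})"
      "(h2 has_real_derivative h3 x) (at x within {0..1})" using hd x by auto
    have i: "((\<lambda>v. v) has_real_derivative 1) (at x within {0..1})" by (rule DERIV_ident)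
    show "((\<lambda>v. v * h v) has_real_derivative G1 x) (at x within {0..1})"
      by (rule deq[OF DERIV_mult[OF i a(1)]]) (simp add: G1_def algebra_simps)
    show "(G1 has_real_derivative G2 x) (at x within {0..1})"
      unfolding G1_def[abs_def]
      by (rule deq[OF DERIV_add[OF a(1) DERIV_mult[OF i a(2)]]]) (simp add: G2_def algebra_simps)
    show "(G2 has_real_derivative G3 x) (at x within {0..1})"
      unfolding G2_def[abs_def]
      by (rule deq[OF DERIV_add[OF DERIV_cmult[OF a(2), of 2] DERIV_mult[OF i a(3)]]]) (simp add: G3_def algebra_simps)
  qed
  moreover have "bnd M (\<lambda>v. v * h v) G1 G2 G3"
    unfolding bnd_def
  proof (intro conjI ballI)
    show "1 \<le> M" using B0 B1 B2 B3 by (simp add: M_def)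
    fix x :: real assume x: "x \<in> {0..1}"
    then have x0: "0 \<le> x" "x \<le> 1" by auto
    have a0: "\<bar>h x\<bar> \<le> B0" "\<bar>h1 x\<bar> \<le> B1" "\<bar>h2 x\<bar> \<le> B2" "\<bar>h3 x\<bar> \<le> B3" using x B0 B1 B2 B3 by auto
    have "\<bar>x * h x\<bar> \<le> x * B0" unfolding abs_mult using a0 x0 by (simp add: mult_left_mono)
    also have "\<dots> \<le> x * M" using x0 B1 B2 B3 by (intro mult_left_mono) (auto simp: M_def)
    also have "\<dots> = M * x" by simp
    finally show "\<bar>x * h x\<bar> \<le> M * x" .
    have "\<bar>x * h1 x\<bar> \<le> 1 * B1" unfolding abs_mult by (rule mult_mono) (use a0 x0 B1 in auto)
    then show "\<bar>G1 x\<bar> \<le> M" using a0 B0 B1 B2 B3 unfolding G1_def M_def by simp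
    have "\<bar>x * h2 x\<bar> \<le> 1 * B2" unfolding abs_mult by (rule mult_mono) (use a0 x0 B2 in auto)
    then show "\<bar>G2 x\<bar> \<le> M" using a0 B0 B1 B2 B3 unfolding G2_def M_def by simp
    have "\<bar>x * h3 x\<bar> \<le> 1 * B3" unfolding abs_mult by (rule mult_mono) (use a0 x0 B3 in auto)
    then show "\<bar>G3 x\<bar> \<le> M" using a0 B0 B1 B2 B3 unfolding G3_def M_def by simp
  qed
  moreover have "Bop h z = G1 z \<and> z * Aop \<theta> h z = z * (1 - z) * G2 z - \<theta> * z * G1 z + \<theta> * z * G1 0"
    if z: "z \<in> {0..1}" for z
  proof -
    have e1: "D01 h z = h1 z" using D01_eq hd z by blast
    have "(D01 h has_real_derivative h2 z) (at z within {0..1})"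
      by (rule has_field_derivative_transform_within[of h1 "h2 z" z "{0..1}" 1])
        (use z hd in \<open>auto intro!: D01_eq[symmetric]\<close>)
    then have e2: "D01 (D01 h) z = h2 z" using D01_eq z by blast
    show ?thesis unfolding Bop_def Aop_def e1 e2 G1_def G2_def by (simp add: algebra_simps)
  qed
  ultimately show ?thesis by blast
qed


definition Dm :: "(real \<Rightarrow> real) \<Rightarrow> nat \<Rightarrow> nat \<Rightarrow> real" where
  "Dm G N e = G ((real e - 1) / real N) - G (real e / real N)"
definition Dp :: "(real \<Rightarrow> real) \<Rightarrow> nat \<Rightarrow> nat \<Rightarrow> real" where
  "Dp G N e = G ((real e + 1) / real N) - G (real e / real N)"

lemma abs_triA: "\<bar>a::real\<bar> \<le> \<bar>a + b\<bar> + \<bar>b\<bar>" by linarith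
lemma abs_triB: "\<bar>a::real\<bar> \<le> \<bar>a - b\<bar> + \<bar>b\<bar>" by linarith

context
  fixes G G1 G2 G3 :: "real \<Rightarrow> real" and M :: real and N :: nat
  assumes dG: "der3 G G1 G2 G3" and bG: "bnd M G G1 G2 G3" and N: "0 < N"
begin

lemma d1: "\<forall>x\<in>{0..1}. (G has_real_derivative G1 x) (at x within {0..1})" using dG by (auto simp: der3_def)
lemma d2: "\<forall>x\<in>{0..1}. (G1 has_real_derivative G2 x) (at x within {0..1})" using dG by (auto simp: der3_def)
lemma d3: "\<forall>x\<in>{0..1}. (G2 has_real_derivative G3 x) (at x within {0..1})" using dG by (auto simp: der3_def)
lemma b2: "\<forall>x\<in>{0..1}. \<bar>G2 x\<bar> \<le> M" using bG by (auto simp: bnd_def)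
lemma b3: "\<forall>x\<in>{0..1}. \<bar>G3 x\<bar> \<le> M" using bG by (auto simp: bnd_def)
lemma b1: "x \<in> {0..1} \<Longrightarrow> \<bar>G1 x\<bar> \<le> M" using bG by (auto simp: bnd_def)
lemma b0: "x \<in> {0..1} \<Longrightarrow> \<bar>G x\<bar> \<le> M * x" using bG by (auto simp: bnd_def)
lemma M1: "1 \<le> M" using bG by (auto simp: bnd_def)

lemma in01: "e \<le> N \<Longrightarrow> real e / real N \<in> {0..1}" using N by (auto simp: divide_simps)
lemma in01m: "1 \<le> e \<Longrightarrow> e \<le> N \<Longrightarrow> (real e - 1) / real N \<in> {0..1}" using N by (auto simp: divide_simps)
lemma in01p: "e + 1 \<le> N \<Longrightarrow> (real e + 1) / real N \<in> {0..1}" using N by (auto simp: divide_simps)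

lemma S1: assumes "1 \<le> e" "e \<le> N"
  shows "\<bar>Dm G N e + G1 (real e / real N) / real N\<bar> \<le> M / real N ^ 2"
proof -
  have "\<bar>G ((real e - 1) / real N) - G (real e / real N) - ((real e - 1) / real N - real e / real N) * G1 (real e / real N)\<bar>
     \<le> M * ((real e - 1) / real N - real e / real N)^2"
    by (rule tay1[OF d1 d2 b2 in01 in01m]) (use assms in auto)
  moreover have "(real e - 1) / real N - real e / real N = - 1 / real N" using N by (simp add: field_simps)
  ultimately show ?thesis by (simp add: Dm_def power_divide)
qed

lemma S2: assumes "e + 1 \<le> N"
  shows "\<bar>Dp G N e - G1 (real e / real N) / real N\<bar> \<le> M / real N ^ 2"
proof -
  have "\<bar>G ((real e + 1) / real N) - G (real e / real N) - ((real e + 1) / real N - real e / real N) * G1 (real e / real N)\<bar>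
     \<le> M * ((real e + 1) / real N - real e / real N)^2"
    by (rule tay1[OF d1 d2 b2 in01 in01p]) (use assms in auto)
  moreover have "(real e + 1) / real N - real e / real N = 1 / real N" using N by (simp add: field_simps)
  ultimately show ?thesis by (simp add: Dp_def power_divide)
qed

lemma S3: assumes "1 \<le> e" "e + 1 \<le> N"
  shows "\<bar>Dm G N e + Dp G N e - G2 (real e / real N) / real N ^ 2\<bar> \<le> 2 * M / real N ^ 3"
proof -
  let ?a = "real e / real N"
  have A: "\<bar>G ((real e - 1) / real N) - G ?a - ((real e - 1) / real N - ?a) * G1 ?a
       - ((real e - 1) / real N - ?a)^2 / 2 * G2 ?a\<bar> \<le> M * \<bar>(real e - 1) / real N - ?a\<bar>^3"
    by (rule tay2[OF d1 d2 d3 b3 in01 in01m]) (use assms in auto)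
  have B: "\<bar>G ((real e + 1) / real N) - G ?a - ((real e + 1) / real N - ?a) * G1 ?a
       - ((real e + 1) / real N - ?a)^2 / 2 * G2 ?a\<bar> \<le> M * \<bar>(real e + 1) / real N - ?a\<bar>^3"
    by (rule tay2[OF d1 d2 d3 b3 in01 in01p]) (use assms in auto)
  have e1: "(real e - 1) / real N - ?a = - (1 / real N)" using N by (simp add: field_simps)
  have e2: "(real e + 1) / real N - ?a = 1 / real N" using N by (simp add: field_simps)
  have "\<bar>Dm G N e + Dp G N e - G2 ?a / real N ^ 2\<bar> \<le>
     \<bar>G ((real e - 1) / real N) - G ?a - ((real e - 1) / real N - ?a) * G1 ?a
       - ((real e - 1) / real N - ?a)^2 / 2 * G2 ?a\<bar> +
     \<bar>G ((real e + 1) / real N) - G ?a - ((real e + 1) / real N - ?a) * G1 ?a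
       - ((real e + 1) / real N - ?a)^2 / 2 * G2 ?a\<bar>"
    unfolding e1 e2 Dm_def Dp_def by (simp add: power2_eq_square field_simps)
  also have "\<dots> \<le> M * (1 / real N)^3 + M * (1 / real N)^3"
    using A B unfolding e1 e2 using N by simp
  finally show ?thesis by (simp add: power_divide)
qed

lemma S4m: assumes "1 \<le> e" "e \<le> N" shows "\<bar>Dm G N e\<bar> \<le> 2 * M / real N"
proof -
  have "\<bar>Dm G N e\<bar> \<le> \<bar>Dm G N e + G1 (real e / real N) / real N\<bar> + \<bar>G1 (real e / real N)\<bar> / real N"
    using abs_triA[of "Dm G N e" "G1 (real e / real N) / real N"] by (simp add: abs_divide)
  also have "\<dots> \<le> M / real N ^ 2 + M / real N"
    using S1[OF assms] b1[OF in01[OF assms(2)]] N by (simp add: divide_right_mono add_mono)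
  also have "M / real N ^ 2 \<le> M / real N" using N M1
    by (simp add: divide_left_mono power2_eq_square)
  finally show ?thesis by simp
qed

lemma S4p: assumes "e + 1 \<le> N" shows "\<bar>Dp G N e\<bar> \<le> 2 * M / real N"
proof -
  have "\<bar>Dp G N e\<bar> \<le> \<bar>Dp G N e - G1 (real e / real N) / real N\<bar> + \<bar>G1 (real e / real N)\<bar> / real N"
    using abs_triB[of "Dp G N e" "G1 (real e / real N) / real N"] by (simp add: abs_divide)
  also have "\<dots> \<le> M / real N ^ 2 + M / real N"
    using S2[OF assms] b1[OF in01] assms N by (simp add: divide_right_mono add_mono)
  also have "M / real N ^ 2 \<le> M / real N" using N M1
    by (simp add: divide_left_mono power2_eq_square)
  finally show ?thesis by simp
qed

end


lemma sum_err:
  fixes f g c :: "'a \<Rightarrow> real"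
  assumes "finite A" "\<And>x. x \<in> A \<Longrightarrow> \<bar>f x - g x\<bar> \<le> c x"
  shows "\<bar>sum f A - sum g A\<bar> \<le> sum c A"
proof -
  have "\<bar>sum (\<lambda>x. f x - g x) A\<bar> \<le> (\<Sum>x\<in>A. \<bar>f x - g x\<bar>)" by (rule sum_abs)
  also have "\<dots> \<le> sum c A" using assms(2) by (rule sum_mono)
  finally show ?thesis by (simp add: sum_subtractf)
qed

lemma pairsum: "finite A \<Longrightarrow> (\<Sum>x\<in>A. \<Sum>y\<in>A. if x \<noteq> y then a x * b y else 0) =
   (\<Sum>x\<in>A. a x) * (\<Sum>y\<in>A. b y) - (\<Sum>x\<in>A. a x * b x :: real)"
proof -
  assume A: "finite A"
  have "(\<Sum>y\<in>A. if x \<noteq> y then a x * b y else 0) = a x * (\<Sum>y\<in>A. b y) - a x * b x" if "x \<in> A" for x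
  proof -
    have "(\<Sum>y\<in>A. if x \<noteq> y then a x * b y else 0) = (\<Sum>y\<in>A-{x}. if x \<noteq> y then a x * b y else 0)"
      using sum.remove[OF A that, of "\<lambda>y. if x \<noteq> y then a x * b y else 0"] by simp
    also have "\<dots> = (\<Sum>y\<in>A-{x}. a x * b y)" by (rule sum.cong) auto
    also have "\<dots> = (\<Sum>y\<in>A. a x * b y) - a x * b x"
      using sum.remove[OF A that, of "\<lambda>y. a x * b y"] by simp
    finally show ?thesis by (simp add: sum_distrib_left)
  qed
  then show ?thesis by (simp add: sum_subtractf sum_distrib_right)
qed

context
  fixes L N :: nat and eta :: "nat \<Rightarrow> nat"
  assumes om: "eta \<in> Omega L N" and N: "0 < N"
begin

lemma sumN: "(\<Sum>x<L. real (eta x)) = real N"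
  using om by (simp add: Omega_def flip: of_nat_sum)

lemma sumu: "(\<Sum>x<L. real (eta x) / real N) = 1"
  using sumN N by (simp flip: sum_divide_distrib)

lemma le_N: "x < L \<Longrightarrow> eta x \<le> N"
proof -
  assume "x < L"
  then have "eta x \<le> (\<Sum>y<L. eta y)" by (intro member_le_sum) auto
  then show ?thesis using om by (simp add: Omega_def)
qed

lemma le_N2: "x < L \<Longrightarrow> y < L \<Longrightarrow> x \<noteq> y \<Longrightarrow> eta x + eta y \<le> N"
proof -
  assume a: "x < L" "y < L" "x \<noteq> y"
  have "eta x + eta y = (\<Sum>z\<in>{x,y}. eta z)" using a by simp
  also have "\<dots> \<le> (\<Sum>z<L. eta z)" using a by (intro sum_mono2) auto
  finally show ?thesis using om by (simp add: Omega_def)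
qed

end


lemma tri2: "0 \<le> (a::real) \<Longrightarrow> \<bar>a * b - c * s\<bar> \<le> a * \<bar>b\<bar> + \<bar>c\<bar> * \<bar>s\<bar>"
  using abs_triangle_ineq4[of "a * b" "c * s"] by (simp add: abs_mult)
lemma tri3: "0 \<le> (a::real) \<Longrightarrow> \<bar>a * p + a * q + c * s\<bar> \<le> a * \<bar>p\<bar> + a * \<bar>q\<bar> + \<bar>c\<bar> * \<bar>s\<bar>"
proof -
  assume a: "0 \<le> a"
  have "\<bar>a * p + a * q + c * s\<bar> \<le> \<bar>a * p\<bar> + \<bar>a * q\<bar> + \<bar>c * s\<bar>" by linarith
  then show ?thesis using a by (simp add: abs_mult)
qed

context
  fixes L N :: nat and eta :: "nat \<Rightarrow> nat" and G G1 G2 G3 :: "real \<Rightarrow> real" and M d \<theta> :: real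
  assumes om: "eta \<in> Omega L N" and N: "0 < N" and dG: "der3 G G1 G2 G3" and bG: "bnd M G G1 G2 G3"
    and d0: "0 \<le> d" and th: "0 \<le> \<theta>"
begin

lemma L1: "1 \<le> L"
proof (rule ccontr)
  assume "\<not> 1 \<le> L" then have "L = 0" by simp
  then show False using om N by (simp add: Omega_def)
qed

lemma Sbound: "\<bar>\<Sum>x<L. real (eta x) / real N * G1 (real (eta x) / real N)\<bar> \<le> M"
proof -
  have "\<bar>\<Sum>x<L. real (eta x) / real N * G1 (real (eta x) / real N)\<bar> \<le> (\<Sum>x<L. real (eta x) / real N * M)"
  proof -
    have "\<bar>(\<Sum>x<L. real (eta x) / real N * G1 (real (eta x) / real N)) - (\<Sum>x<L. 0)\<bar> \<le> (\<Sum>x<L. real (eta x) / real N * M)"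
    proof (rule sum_err)
      fix x assume x: "x \<in> {..<L}"
      have "\<bar>G1 (real (eta x) / real N)\<bar> \<le> M" using b1[OF dG bG N in01[OF dG bG N le_N[OF om N]]] x by simp
      then show "\<bar>real (eta x) / real N * G1 (real (eta x) / real N) - 0\<bar> \<le> real (eta x) / real N * M"
        by (simp add: abs_mult) (intro divide_right_mono mult_left_mono, auto)
    qed simp
    then show ?thesis by simp
  qed
  also have "\<dots> = (\<Sum>x<L. real (eta x) / real N) * M" by (rule sum_distrib_right[symmetric])
  also have "\<dots> = M" using sumu[OF om N] by simp
  finally show ?thesis .
qed

lemma T1_main:
  "\<bar>(\<Sum>x<L. \<Sum>y<L. if x \<noteq> y then real (eta x) * (d + real (eta y)) * (Dm G N (eta x) + Dp G N (eta y)) else 0)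
    - ((\<Sum>x<L. real (eta x) / real N * (1 - real (eta x) / real N) * G2 (real (eta x) / real N)
         - \<theta> * (real (eta x) / real N) * G1 (real (eta x) / real N)) + \<theta> * G1 0)\<bar>
   \<le> M * (2 / real N + 2 * \<bar>d * real L - \<theta>\<bar> + 3 * d + 2 * d * real L / real N)"
proof -
  define e where "e x = real (eta x)" for x
  define u where "u x = real (eta x) / real N" for x
  define dm where "dm x = Dm G N (eta x)" for x
  define dp where "dp x = Dp G N (eta x)" for x
  have sumN': "(\<Sum>x<L. e x) = real N" using sumN[OF om N] by (simp add: e_def)
  have sumu': "(\<Sum>x<L. u x) = 1" using sumu[OF om N] by (simp add: u_def)
  have eN: "x < L \<Longrightarrow> e x \<le> real N" for x using le_N[OF om N] by (simp add: e_def)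
  have e0: "0 \<le> e x" for x by (simp add: e_def)
  have ue: "u x = e x / real N" for x by (simp add: u_def e_def)
  have u01: "x < L \<Longrightarrow> u x \<in> {0..1}" for x using in01[OF dG bG N le_N[OF om N]] by (simp add: u_def)
  have Mpos: "1 \<le> M" using M1[OF dG bG N] .
  have Nr: "real N > 0" using N by simp
  define P1 where "P1 = (\<Sum>x<L. e x * (real N - e x) * dm x)"
  define P2 where "P2 = (\<Sum>x<L. e x * (real N - e x) * dp x)"
  define X where "X = (\<Sum>x<L. e x * dm x)"
  define Y where "Y = (\<Sum>x<L. (real N - e x) * dp x)"
  define S where "S = (\<Sum>x<L. u x * G1 (u x))"
  define Z where "Z = (\<Sum>x<L. (1 - u x) * G1 (u x))"
  define Q where "Q = (\<Sum>x<L. u x * (1 - u x) * G2 (u x))"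
  have split: "(\<Sum>x<L. \<Sum>y<L. if x \<noteq> y then e x * (d + e y) * (dm x + dp y) else 0)
     = P1 + P2 + d * (real L - 1) * X + d * Y"
  proof -
    have "(\<Sum>x<L. \<Sum>y<L. if x \<noteq> y then e x * (d + e y) * (dm x + dp y) else 0) =
      (\<Sum>x<L. \<Sum>y<L. if x \<noteq> y then (e x * dm x) * e y else 0) +
      (\<Sum>x<L. \<Sum>y<L. if x \<noteq> y then e x * (e y * dp y) else 0) +
      (\<Sum>x<L. \<Sum>y<L. if x \<noteq> y then (e x * dm x) * d else 0) +
      (\<Sum>x<L. \<Sum>y<L. if x \<noteq> y then e x * (d * dp y) else 0)"
      by (simp only: sum.distrib[symmetric]) (intro sum.cong refl, simp add: algebra_simps)
    also have "\<dots> = P1 + P2 + d * (real L - 1) * X + d * Y"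
      unfolding pairsum[OF finite_lessThan] P1_def P2_def X_def Y_def
      by (simp add: sumN' sum_subtractf sum_distrib_left sum_distrib_right algebra_simps)
    finally show ?thesis .
  qed
  have i: "\<bar>(P1 + P2) - Q\<bar> \<le> 2 * M / real N"
  proof -
    have "\<bar>(\<Sum>x<L. e x * (real N - e x) * (dm x + dp x)) - Q\<bar> \<le> (\<Sum>x<L. 2 * M * e x / real N ^ 2)"
      unfolding Q_def
    proof (rule sum_err)
      fix x assume x: "x \<in> {..<L}"
      show "\<bar>e x * (real N - e x) * (dm x + dp x) - u x * (1 - u x) * G2 (u x)\<bar> \<le> 2 * M * e x / real N ^ 2"
      proof (cases "eta x = 0 \<or> eta x = N")
        case True
        then show ?thesis using Mpos Nr by (auto simp: e_def u_def)
      next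
        case False
        then have c: "1 \<le> eta x" "eta x + 1 \<le> N" using le_N[OF om N, of x] x by auto
        have eq: "e x * (real N - e x) * (dm x + dp x) - u x * (1 - u x) * G2 (u x)
          = e x * (real N - e x) * (dm x + dp x - G2 (u x) / real N ^ 2)"
          using Nr by (simp add: ue field_simps power2_eq_square)
        have hb: "\<bar>dm x + dp x - G2 (u x) / real N ^ 2\<bar> \<le> 2 * M / real N ^ 3"
          using S3[OF dG bG N c] by (simp add: dm_def dp_def u_def)
        moreover have nn: "0 \<le> e x * (real N - e x)" using eN[of x] x e0[of x] by simp
        ultimately have "\<bar>e x * (real N - e x) * (dm x + dp x - G2 (u x) / real N ^ 2)\<bar>
            \<le> e x * (real N - e x) * (2 * M / real N ^ 3)"
          unfolding abs_mult[of "e x * (real N - e x)"] abs_of_nonneg[OF nn] using mult_left_mono[OF hb nn] by simp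
        also have "\<dots> \<le> e x * real N * (2 * M / real N ^ 3)"
          using e0[of x] Mpos Nr by (intro mult_right_mono mult_left_mono) auto
        also have "\<dots> = 2 * M * e x / real N ^ 2" using Nr by (simp add: field_simps power3_eq_cube power2_eq_square)
        finally show ?thesis using eq by simp
      qed
    qed simp
    also have "\<dots> = 2 * M / real N" using sumN' Nr
      by (simp add: sum_distrib_left[symmetric] sum_divide_distrib[symmetric] power2_eq_square)
    finally show ?thesis by (simp add: P1_def P2_def sum.distrib[symmetric] algebra_simps)
  qed
  have ii: "\<bar>X + S\<bar> \<le> M / real N"
  proof -
    have "\<bar>X - (\<Sum>x<L. - (u x * G1 (u x)))\<bar> \<le> (\<Sum>x<L. M * e x / real N ^ 2)"
      unfolding X_def
    proof (rule sum_err)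
      fix x assume x: "x \<in> {..<L}"
      show "\<bar>e x * dm x - - (u x * G1 (u x))\<bar> \<le> M * e x / real N ^ 2"
      proof (cases "eta x = 0")
        case True
        then show ?thesis by (simp add: e_def u_def)
      next
        case False
        then have c: "1 \<le> eta x" "eta x \<le> N" using le_N[OF om N, of x] x by auto
        have "e x * dm x - - (u x * G1 (u x)) = e x * (dm x + G1 (u x) / real N)"
          using Nr by (simp add: ue field_simps)
        also have "\<bar>\<dots>\<bar> \<le> e x * (M / real N ^ 2)"
          using mult_left_mono[OF S1[OF dG bG N c] e0[of x]] e0[of x] by (simp add: abs_mult dm_def u_def)
        finally show ?thesis by (simp add: mult.commute)
      qed
    qed simp
    also have "\<dots> = M / real N" using sumN' Nr
      by (simp add: sum_distrib_left[symmetric] sum_divide_distrib[symmetric] power2_eq_square)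
    finally show ?thesis by (simp add: S_def sum_negf)
  qed
  have iii: "\<bar>Y - Z\<bar> \<le> real L * M / real N"
  proof -
    have "\<bar>Y - Z\<bar> \<le> (\<Sum>x<L. M / real N)"
      unfolding Y_def Z_def
    proof (rule sum_err)
      fix x assume x: "x \<in> {..<L}"
      show "\<bar>(real N - e x) * dp x - (1 - u x) * G1 (u x)\<bar> \<le> M / real N"
      proof (cases "eta x = N")
        case True
        then show ?thesis using Mpos Nr by (simp add: e_def u_def)
      next
        case False
        then have c: "eta x + 1 \<le> N" using le_N[OF om N, of x] x by auto
        have "(real N - e x) * dp x - (1 - u x) * G1 (u x) = (real N - e x) * (dp x - G1 (u x) / real N)"
          using Nr by (simp add: ue field_simps)
        also have "\<bar>\<dots>\<bar> \<le> (real N - e x) * (M / real N ^ 2)"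
        proof -
          have nn: "0 \<le> real N - e x" using eN[of x] x by simp
          show ?thesis using mult_left_mono[OF S2[OF dG bG N c] nn] nn by (simp add: abs_mult dp_def u_def)
        qed
        also have "\<dots> \<le> real N * (M / real N ^ 2)"
          using e0[of x] Mpos Nr by (intro mult_right_mono) auto
        also have "\<dots> = M / real N" using Nr by (simp add: power2_eq_square)
        finally show ?thesis .
      qed
    qed simp
    then show ?thesis by simp
  qed
  have iv: "\<bar>Z - real L * G1 0\<bar> \<le> 2 * M"
  proof -
    have "\<bar>Z - (\<Sum>x<L. G1 0)\<bar> \<le> (\<Sum>x<L. 2 * M * u x)"
      unfolding Z_def
    proof (rule sum_err)
      fix x assume x: "x \<in> {..<L}"
      have l: "\<bar>G1 (u x) - G1 0\<bar> \<le> M * \<bar>u x - 0\<bar>"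
        by (rule lipb[OF d2[OF dG bG N] b2[OF dG bG N] _ u01]) (use x in auto)
      have "\<bar>u x * G1 (u x)\<bar> \<le> u x * M"
        using b1[OF dG bG N u01[of x]] x u01[of x] by (simp add: abs_mult mult_left_mono)
      then show "\<bar>(1 - u x) * G1 (u x) - G1 0\<bar> \<le> 2 * M * u x"
        using l u01[of x] x by (auto simp: algebra_simps abs_if split: if_splits)
    qed simp
    also have "\<dots> = 2 * M" using sumu' by (simp flip: sum_distrib_left)
    finally show ?thesis by simp
  qed
  have Sb: "\<bar>S\<bar> \<le> M" using Sbound by (simp add: S_def u_def)
  have G10: "\<bar>G1 0\<bar> \<le> M" using b1[OF dG bG N, of 0] by simp
  have target: "(\<Sum>x<L. u x * (1 - u x) * G2 (u x) - \<theta> * u x * G1 (u x)) + \<theta> * G1 0 = Q - \<theta> * S + \<theta> * G1 0"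
    by (simp add: Q_def S_def sum_subtractf sum_distrib_left sum.distrib algebra_simps)
  have main: "\<bar>P1 + P2 + d * (real L - 1) * X + d * Y - (Q - \<theta> * S + \<theta> * G1 0)\<bar>
     \<le> M * (2 / real N + 2 * \<bar>d * real L - \<theta>\<bar> + 3 * d + 2 * d * real L / real N)"
  proof -
    have "1 \<le> real L" using L1 by simp
    then have "d * 1 \<le> d * real L" using d0 by (rule mult_left_mono)
    then have dL1: "0 \<le> d * (real L - 1)" "d * (real L - 1) \<le> d * real L" using d0 by (auto simp: algebra_simps)
    have A: "\<bar>d * (real L - 1) * X + \<theta> * S\<bar> \<le> d * real L * (M / real N) + (\<bar>d * real L - \<theta>\<bar> + d) * M"
    proof -
      have "d * (real L - 1) * X + \<theta> * S = d * (real L - 1) * (X + S) - (d * (real L - 1) - \<theta>) * S"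
        by (simp add: algebra_simps)
      also have "\<bar>\<dots>\<bar> \<le> d * (real L - 1) * \<bar>X + S\<bar> + \<bar>d * (real L - 1) - \<theta>\<bar> * \<bar>S\<bar>"
        using dL1 by (intro tri2) auto
      also have "\<dots> \<le> d * real L * (M / real N) + (\<bar>d * real L - \<theta>\<bar> + d) * M"
      proof -
        have "d * (real L - 1) * \<bar>X + S\<bar> \<le> d * real L * (M / real N)"
          by (rule mult_mono) (use dL1 ii in auto)
        moreover have "\<bar>d * real L - \<theta> - d\<bar> \<le> \<bar>d * real L - \<theta>\<bar> + d" using d0 by linarith
        then have "\<bar>d * (real L - 1) - \<theta>\<bar> * \<bar>S\<bar> \<le> (\<bar>d * real L - \<theta>\<bar> + d) * M"
          by (intro mult_mono) (use Sb d0 in \<open>auto simp: algebra_simps\<close>)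
        ultimately show ?thesis by linarith
      qed
      finally show ?thesis .
    qed
    have B: "\<bar>d * Y - \<theta> * G1 0\<bar> \<le> d * (real L * M / real N) + d * (2 * M) + \<bar>d * real L - \<theta>\<bar> * M"
    proof -
      have "d * Y - \<theta> * G1 0 = d * (Y - Z) + d * (Z - real L * G1 0) + (d * real L - \<theta>) * G1 0"
        by (simp add: algebra_simps)
      also have "\<bar>\<dots>\<bar> \<le> d * \<bar>Y - Z\<bar> + d * \<bar>Z - real L * G1 0\<bar> + \<bar>d * real L - \<theta>\<bar> * \<bar>G1 0\<bar>"
        using d0 by (intro tri3) auto
      also have "\<dots> \<le> d * (real L * M / real N) + d * (2 * M) + \<bar>d * real L - \<theta>\<bar> * M"
        using iii iv G10 d0 by (intro add_mono mult_left_mono) auto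
      finally show ?thesis .
    qed
    have "\<bar>P1 + P2 + d * (real L - 1) * X + d * Y - (Q - \<theta> * S + \<theta> * G1 0)\<bar>
       \<le> \<bar>(P1 + P2) - Q\<bar> + \<bar>d * (real L - 1) * X + \<theta> * S\<bar> + \<bar>d * Y - \<theta> * G1 0\<bar>" by linarith
    also have "\<dots> \<le> 2 * M / real N + (d * real L * (M / real N) + (\<bar>d * real L - \<theta>\<bar> + d) * M)
        + (d * (real L * M / real N) + d * (2 * M) + \<bar>d * real L - \<theta>\<bar> * M)"
      using i A B by linarith
    also have "\<dots> = M * (2 / real N + 2 * \<bar>d * real L - \<theta>\<bar> + 3 * d + 2 * d * real L / real N)"
      by (simp add: algebra_simps)
    finally show ?thesis .
  qed
  have split2: "(\<Sum>x<L. \<Sum>y<L. if x \<noteq> y then real (eta x) * (d + real (eta y)) * (Dm G N (eta x) + Dp G N (eta y)) else 0)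
     = P1 + P2 + d * (real L - 1) * X + d * Y"
    using split by (simp only: e_def dm_def dp_def)
  have target2: "(\<Sum>x<L. real (eta x) / real N * (1 - real (eta x) / real N) * G2 (real (eta x) / real N)
         - \<theta> * (real (eta x) / real N) * G1 (real (eta x) / real N)) + \<theta> * G1 0 = Q - \<theta> * S + \<theta> * G1 0"
    using target by (simp only: u_def)
  show ?thesis unfolding split2 target2 by (rule main)
qed

end


lemma sum_err2:
  fixes f g c :: "'a \<Rightarrow> 'b \<Rightarrow> real"
  assumes "finite A" "finite B" "\<And>x y. x \<in> A \<Longrightarrow> y \<in> B \<Longrightarrow> \<bar>f x y - g x y\<bar> \<le> c x y"
  shows "\<bar>(\<Sum>x\<in>A. \<Sum>y\<in>B. f x y) - (\<Sum>x\<in>A. \<Sum>y\<in>B. g x y)\<bar> \<le> (\<Sum>x\<in>A. \<Sum>y\<in>B. c x y)"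
  by (rule sum_err[OF assms(1)], rule sum_err[OF assms(2)], rule assms(3))

lemma quad_id:
  fixes u g k :: "nat \<Rightarrow> real"
  assumes "(\<Sum>x\<in>A. u x) = 1"
  shows "(\<Sum>x\<in>A. \<Sum>y\<in>A. u x * u y * ((g y - g x) * (k y - k x)))
     = 2 * ((\<Sum>x\<in>A. u x * (g x * k x)) - (\<Sum>x\<in>A. u x * g x) * (\<Sum>x\<in>A. u x * k x))"
proof -
  have e: "u x * u y * ((g y - g x) * (k y - k x)) = u x * (u y * (g y * k y)) + u y * (u x * (g x * k x))
      - (u x * g x) * (u y * k y) - (u y * g y) * (u x * k x)" for x y
    by (simp add: algebra_simps)
  have s1: "(\<Sum>x\<in>A. \<Sum>y\<in>A. u x * (u y * (g y * k y))) = (\<Sum>x\<in>A. u x * (g x * k x))"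
    using assms by (simp add: sum_distrib_left[symmetric] sum_distrib_right[symmetric])
  have s2: "(\<Sum>x\<in>A. \<Sum>y\<in>A. u y * (u x * (g x * k x))) = (\<Sum>x\<in>A. u x * (g x * k x))"
    using assms by (simp add: sum_distrib_left[symmetric] sum_distrib_right[symmetric])
  have s3: "(\<Sum>x\<in>A. \<Sum>y\<in>A. (u x * g x) * (u y * k y)) = (\<Sum>x\<in>A. u x * g x) * (\<Sum>x\<in>A. u x * k x)"
    by (simp add: sum_product)
  have s4: "(\<Sum>x\<in>A. \<Sum>y\<in>A. (u y * g y) * (u x * k x)) = (\<Sum>x\<in>A. u x * g x) * (\<Sum>x\<in>A. u x * k x)"
    by (subst sum.swap) (simp add: sum_product)
  show ?thesis unfolding e by (simp add: sum_subtractf sum.distrib s1 s2 s3 s4)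
qed

context
  fixes L N :: nat and eta :: "nat \<Rightarrow> nat" and Ga Ga1 Ga2 Ga3 Gb Gb1 Gb2 Gb3 :: "real \<Rightarrow> real" and M d :: real
  assumes om: "eta \<in> Omega L N" and N: "0 < N" and dGa: "der3 Ga Ga1 Ga2 Ga3" and bGa: "bnd M Ga Ga1 Ga2 Ga3"
    and dGb: "der3 Gb Gb1 Gb2 Gb3" and bGb: "bnd M Gb Gb1 Gb2 Gb3"
    and d0: "0 \<le> d"
begin

lemma T2_main:
  "\<bar>(\<Sum>x<L. \<Sum>y<L. if x \<noteq> y then real (eta x) * (d + real (eta y)) *
        ((Dm Ga N (eta x) + Dp Ga N (eta y)) * (Dm Gb N (eta x) + Dp Gb N (eta y))) else 0)
    - 2 * ((\<Sum>x<L. real (eta x) / real N * (Ga1 (real (eta x) / real N) * Gb1 (real (eta x) / real N)))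
       - (\<Sum>x<L. real (eta x) / real N * Ga1 (real (eta x) / real N)) * (\<Sum>x<L. real (eta x) / real N * Gb1 (real (eta x) / real N)))\<bar>
   \<le> 16 * M^2 * (1 / real N + d * real L / real N)"
proof -
  define e where "e x = real (eta x)" for x
  define u where "u x = real (eta x) / real N" for x
  define Da where "Da x y = Dm Ga N (eta x) + Dp Ga N (eta y)" for x y
  define Db where "Db x y = Dm Gb N (eta x) + Dp Gb N (eta y)" for x y
  define aa where "aa x y = (Ga1 (u y) - Ga1 (u x)) / real N" for x y
  define ab where "ab x y = (Gb1 (u y) - Gb1 (u x)) / real N" for x y
  have sumN': "(\<Sum>x<L. e x) = real N" using sumN[OF om N] by (simp add: e_def)
  have sumu': "(\<Sum>x<L. u x) = 1" using sumu[OF om N] by (simp add: u_def)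
  have e0: "0 \<le> e x" for x by (simp add: e_def)
  have ue: "u x = e x / real N" for x by (simp add: u_def e_def)
  have u01: "x < L \<Longrightarrow> u x \<in> {0..1}" for x using in01[OF dGa bGa N le_N[OF om N]] by (simp add: u_def)
  have Mpos: "1 \<le> M" using M1[OF dGa bGa N] .
  have Nr: "real N > 0" using N by simp
  have key: "\<bar>Da x y * Db x y - aa x y * ab x y\<bar> \<le> 12 * M^2 / real N ^ 3 \<and> \<bar>Da x y * Db x y\<bar> \<le> 16 * M^2 / real N ^ 2"
    if xy: "x < L" "y < L" "x \<noteq> y" "1 \<le> eta x" for x y
  proof -
    have c: "1 \<le> eta x" "eta x \<le> N" "eta y + 1 \<le> N" using le_N[OF om N, of x] le_N2[OF om N, of x y] xy by auto
    have g: "\<bar>Da x y - aa x y\<bar> \<le> 2 * M / real N ^ 2" if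
      "\<bar>Dm G N (eta x) + G1 (u x) / real N\<bar> \<le> M / real N ^ 2"
      "\<bar>Dp G N (eta y) - G1 (u y) / real N\<bar> \<le> M / real N ^ 2"
      "Da x y = Dm G N (eta x) + Dp G N (eta y)" "aa x y = (G1 (u y) - G1 (u x)) / real N"
      for G G1 :: "real \<Rightarrow> real" and Da aa :: "nat \<Rightarrow> nat \<Rightarrow> real"
    proof -
      have "Da x y - aa x y = (Dm G N (eta x) + G1 (u x) / real N) + (Dp G N (eta y) - G1 (u y) / real N)"
        using that(3,4) by (simp add: diff_divide_distrib)
      then show ?thesis using that(1,2) by simp
    qed
    have ga: "\<bar>Da x y - aa x y\<bar> \<le> 2 * M / real N ^ 2"
      by (rule g[of Ga Ga1]) (use S1[OF dGa bGa N c(1,2)] S2[OF dGa bGa N c(3)] in \<open>auto simp: u_def Da_def aa_def\<close>)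
    have gb: "\<bar>Db x y - ab x y\<bar> \<le> 2 * M / real N ^ 2"
      by (rule g[of Gb Gb1]) (use S1[OF dGb bGb N c(1,2)] S2[OF dGb bGb N c(3)] in \<open>auto simp: u_def Db_def ab_def\<close>)
    have Dab: "\<bar>Da x y\<bar> \<le> 4 * M / real N" "\<bar>Db x y\<bar> \<le> 4 * M / real N"
      using S4m[OF dGa bGa N c(1,2)] S4p[OF dGa bGa N c(3)] S4m[OF dGb bGb N c(1,2)] S4p[OF dGb bGb N c(3)]
      unfolding Da_def Db_def by linarith+
    have aab: "\<bar>aa x y\<bar> \<le> 2 * M / real N"
      using b1[OF dGa bGa N u01[OF xy(1)]] b1[OF dGa bGa N u01[OF xy(2)]] Nr
      unfolding aa_def by (simp add: divide_right_mono)
    have "Da x y * Db x y - aa x y * ab x y = (Da x y - aa x y) * Db x y + aa x y * (Db x y - ab x y)"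
      by (simp add: algebra_simps)
    then have "\<bar>Da x y * Db x y - aa x y * ab x y\<bar> \<le> \<bar>Da x y - aa x y\<bar> * \<bar>Db x y\<bar> + \<bar>aa x y\<bar> * \<bar>Db x y - ab x y\<bar>"
      by (simp add: abs_mult[symmetric] abs_triangle_ineq)
    also have "\<dots> \<le> (2 * M / real N ^ 2) * (4 * M / real N) + (2 * M / real N) * (2 * M / real N ^ 2)"
      by (intro add_mono mult_mono) (use ga gb Dab aab Mpos Nr in auto)
    also have "\<dots> = 12 * M^2 / real N ^ 3" using Nr by (simp add: field_simps power2_eq_square power3_eq_cube)
    finally have A: "\<bar>Da x y * Db x y - aa x y * ab x y\<bar> \<le> 12 * M^2 / real N ^ 3" .
    have "\<bar>Da x y * Db x y\<bar> \<le> (4 * M / real N) * (4 * M / real N)"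
      unfolding abs_mult by (intro mult_mono) (use Dab Mpos Nr in auto)
    also have "\<dots> = 16 * M^2 / real N ^ 2" by (simp add: field_simps power2_eq_square)
    finally show ?thesis using A by simp
  qed
  define W1 where "W1 x y = (if x \<noteq> y then e x * e y * (Da x y * Db x y) else 0)" for x y
  define W2 where "W2 x y = (if x \<noteq> y then d * e x * (Da x y * Db x y) else 0)" for x y
  define V where "V x y = u x * u y * ((Ga1 (u y) - Ga1 (u x)) * (Gb1 (u y) - Gb1 (u x)))" for x y
  have split: "(\<Sum>x<L. \<Sum>y<L. if x \<noteq> y then e x * (d + e y) * (Da x y * Db x y) else 0)
     = (\<Sum>x<L. \<Sum>y<L. W1 x y) + (\<Sum>x<L. \<Sum>y<L. W2 x y)"
    by (simp only: sum.distrib[symmetric]) (intro sum.cong refl, simp add: W1_def W2_def algebra_simps)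
  have B: "\<bar>(\<Sum>x<L. \<Sum>y<L. W2 x y) - (\<Sum>x<L. \<Sum>y<L. 0)\<bar> \<le> (\<Sum>x<L. \<Sum>y<L. d * e x * (16 * M^2 / real N ^ 2))"
  proof (rule sum_err2)
    fix x y assume xy: "x \<in> {..<L}" "y \<in> {..<L}"
    show "\<bar>W2 x y - 0\<bar> \<le> d * e x * (16 * M^2 / real N ^ 2)"
    proof (cases "x = y \<or> eta x = 0")
      case True then show ?thesis using d0 e0[of x] by (auto simp: W2_def e_def)
    next
      case False
      then have "\<bar>Da x y * Db x y\<bar> \<le> 16 * M^2 / real N ^ 2" using key[of x y] xy by auto
      then have "d * e x * \<bar>Da x y * Db x y\<bar> \<le> d * e x * (16 * M^2 / real N ^ 2)"
        by (rule mult_left_mono) (use d0 e0[of x] in simp)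
      then show ?thesis using False d0 e0[of x] by (simp add: W2_def abs_mult)
    qed
  qed auto
  have Bs: "(\<Sum>x<L. \<Sum>y<L. d * e x * (16 * M^2 / real N ^ 2)) = 16 * M^2 * (d * real L / real N)"
  proof -
    have "(\<Sum>x<L. \<Sum>y<L. d * e x * (16 * M^2 / real N ^ 2)) = real L * (d * (16 * M^2 / real N ^ 2)) * (\<Sum>x<L. e x)"
      by (simp add: sum_distrib_left sum_distrib_right sum_divide_distrib algebra_simps)
    also have "\<dots> = 16 * M^2 * (d * real L / real N)" using sumN' Nr by (simp add: field_simps power2_eq_square)
    finally show ?thesis .
  qed
  have C: "\<bar>(\<Sum>x<L. \<Sum>y<L. W1 x y) - (\<Sum>x<L. \<Sum>y<L. V x y)\<bar> \<le> (\<Sum>x<L. \<Sum>y<L. e x * e y * (12 * M^2 / real N ^ 3))"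
  proof (rule sum_err2)
    fix x y assume xy: "x \<in> {..<L}" "y \<in> {..<L}"
    show "\<bar>W1 x y - V x y\<bar> \<le> e x * e y * (12 * M^2 / real N ^ 3)"
    proof (cases "x = y \<or> eta x = 0")
      case True then show ?thesis using e0[of x] e0[of y] Mpos by (auto simp: W1_def V_def e_def u_def)
    next
      case False
      then have k: "\<bar>Da x y * Db x y - aa x y * ab x y\<bar> \<le> 12 * M^2 / real N ^ 3" using key[of x y] xy by auto
      have "V x y = e x * e y * (aa x y * ab x y)" using Nr
        by (simp add: V_def aa_def ab_def ue field_simps power2_eq_square)
      then have "W1 x y - V x y = e x * e y * (Da x y * Db x y - aa x y * ab x y)"
        using False by (simp add: W1_def algebra_simps)
      then have "\<bar>W1 x y - V x y\<bar> = e x * e y * \<bar>Da x y * Db x y - aa x y * ab x y\<bar>"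
        using e0[of x] e0[of y] by (simp add: abs_mult)
      also have "\<dots> \<le> e x * e y * (12 * M^2 / real N ^ 3)"
        by (rule mult_left_mono[OF k]) (use e0[of x] e0[of y] in simp)
      finally show ?thesis .
    qed
  qed auto
  have Cs: "(\<Sum>x<L. \<Sum>y<L. e x * e y * (12 * M^2 / real N ^ 3)) = 12 * M^2 / real N"
  proof -
    have "(\<Sum>x<L. \<Sum>y<L. e x * e y * (12 * M^2 / real N ^ 3)) = (\<Sum>x<L. e x) * (\<Sum>y<L. e y) * (12 * M^2 / real N ^ 3)"
      by (simp only: sum_product sum_distrib_right sum_distrib_left mult.commute)
    also have "\<dots> = 12 * M^2 / real N" using sumN' Nr by (simp add: field_simps power2_eq_square power3_eq_cube)
    finally show ?thesis .
  qed
  have D: "(\<Sum>x<L. \<Sum>y<L. V x y) = 2 * ((\<Sum>x<L. u x * (Ga1 (u x) * Gb1 (u x)))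
       - (\<Sum>x<L. u x * Ga1 (u x)) * (\<Sum>x<L. u x * Gb1 (u x)))"
    unfolding V_def by (rule quad_id[OF sumu'])
  have "\<bar>(\<Sum>x<L. \<Sum>y<L. W1 x y) + (\<Sum>x<L. \<Sum>y<L. W2 x y) - (\<Sum>x<L. \<Sum>y<L. V x y)\<bar>
     \<le> 12 * M^2 / real N + 16 * M^2 * (d * real L / real N)"
    using B Bs C Cs by simp
  also have "\<dots> \<le> 16 * M^2 * (1 / real N + d * real L / real N)"
    using Nr by (simp add: field_simps)
  finally have fin: "\<bar>(\<Sum>x<L. \<Sum>y<L. if x \<noteq> y then e x * (d + e y) * (Da x y * Db x y) else 0)
     - 2 * ((\<Sum>x<L. u x * (Ga1 (u x) * Gb1 (u x))) - (\<Sum>x<L. u x * Ga1 (u x)) * (\<Sum>x<L. u x * Gb1 (u x)))\<bar>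
     \<le> 16 * M^2 * (1 / real N + d * real L / real N)"
    unfolding split D[symmetric] .
  then show ?thesis by (simp only: e_def u_def Da_def Db_def)
qed

end


lemma jump_x: "x \<noteq> y \<Longrightarrow> jump eta x y x = eta x - 1"
  by (auto simp: jump_def)
lemma jump_y: "x \<noteq> y \<Longrightarrow> jump eta x y y = eta y + 1"
  by (simp add: jump_def)
lemma jump_z: "z \<noteq> x \<Longrightarrow> z \<noteq> y \<Longrightarrow> jump eta x y z = eta z"
  by (simp add: jump_def)

lemma jumpF:
  assumes xy: "x < L" "y < L" "x \<noteq> y" "1 \<le> eta x"
  shows "(\<Sum>z<L. g (real (jump eta x y z) / real N)) = (\<Sum>z<L. g (real (eta z) / real N)) + (Dm g N (eta x) + Dp g N (eta y))"
proof -
  have "(\<Sum>z<L. g (real (jump eta x y z) / real N) - g (real (eta z) / real N))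
      = (\<Sum>z\<in>{x,y}. g (real (jump eta x y z) / real N) - g (real (eta z) / real N))"
    by (rule sum.mono_neutral_right) (use xy in \<open>auto simp: jump_z\<close>)
  also have "\<dots> = Dm g N (eta x) + Dp g N (eta y)"
    using xy by (simp add: jump_x jump_y Dm_def Dp_def of_nat_diff add.commute)
  finally show ?thesis by (simp add: sum_subtractf algebra_simps)
qed

lemma prod_diff_expand:
  fixes D F :: "nat \<Rightarrow> real"
  assumes that: "finite A"
  shows "(\<Prod>k\<in>A. F k + D k) - (\<Prod>k\<in>A. F k) = (\<Sum>S\<in>Pow A - {{}}. (\<Prod>k\<in>S. D k) * (\<Prod>k\<in>A - S. F k))"
proof -
  have "(\<Prod>k\<in>A. F k + D k) = (\<Prod>k\<in>A. D k + F k)" by (simp add: add.commute)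
  also have "\<dots> = (\<Sum>S\<in>Pow A. (\<Prod>k\<in>S. D k) * (\<Prod>k\<in>A - S. F k))" by (rule prod_add[OF that])
  also have "\<dots> = (\<Prod>k\<in>{}. D k) * (\<Prod>k\<in>A - {}. F k) + (\<Sum>S\<in>Pow A - {{}}. (\<Prod>k\<in>S. D k) * (\<Prod>k\<in>A - S. F k))"
    by (rule sum.remove) (use that in auto)
  finally show ?thesis by simp
qed

definition Fk :: "nat \<Rightarrow> nat \<Rightarrow> (real \<Rightarrow> real) \<Rightarrow> (nat \<Rightarrow> nat) \<Rightarrow> real" where
  "Fk L N g \<xi> = (\<Sum>z<L. g (real (\<xi> z) / real N))"
definition Dl :: "(real \<Rightarrow> real) \<Rightarrow> nat \<Rightarrow> (nat \<Rightarrow> nat) \<Rightarrow> nat \<Rightarrow> nat \<Rightarrow> real" where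
  "Dl g N eta x y = Dm g N (eta x) + Dp g N (eta y)"

definition Qs :: "nat \<Rightarrow> nat \<Rightarrow> (nat \<Rightarrow> nat) \<Rightarrow> real \<Rightarrow> nat \<Rightarrow> (nat \<Rightarrow> real \<Rightarrow> real) \<Rightarrow> nat set \<Rightarrow> real" where
  "Qs L N eta d n G S = (\<Sum>x<L. \<Sum>y<L. if x \<noteq> y then real (eta x) * (d + real (eta y)) *
      ((\<Prod>k\<in>S. Dl (G k) N eta x y) * (\<Prod>k\<in>{..<n} - S. Fk L N (G k) eta)) else 0)"

lemma genexp:
  "gen L d (\<lambda>\<xi>. \<Prod>k<n. Fk L N (G k) \<xi>) eta = (\<Sum>S\<in>Pow {..<n} - {{}}. Qs L N eta d n G S)"
proof -
  let ?P = "Pow {..<n} - {{}}"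
  have per: "(if x \<noteq> y then real (eta x) * (d + real (eta y)) *
        ((\<Prod>k<n. Fk L N (G k) (jump eta x y)) - (\<Prod>k<n. Fk L N (G k) eta)) else 0)
     = (\<Sum>S\<in>?P. if x \<noteq> y then real (eta x) * (d + real (eta y)) *
      ((\<Prod>k\<in>S. Dl (G k) N eta x y) * (\<Prod>k\<in>{..<n} - S. Fk L N (G k) eta)) else 0)"
    if xy: "x < L" "y < L" for x y
  proof (cases "x \<noteq> y \<and> 1 \<le> eta x")
    case True
    have "(\<Prod>k<n. Fk L N (G k) (jump eta x y)) = (\<Prod>k<n. Fk L N (G k) eta + Dl (G k) N eta x y)"
      using jumpF[OF xy _ _, of eta] True by (simp add: Fk_def Dl_def)
    then have "(\<Prod>k<n. Fk L N (G k) (jump eta x y)) - (\<Prod>k<n. Fk L N (G k) eta)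
        = (\<Sum>S\<in>?P. (\<Prod>k\<in>S. Dl (G k) N eta x y) * (\<Prod>k\<in>{..<n} - S. Fk L N (G k) eta))"
      using prod_diff_expand[of "{..<n}" "\<lambda>k. Fk L N (G k) eta" "\<lambda>k. Dl (G k) N eta x y"] by simp
    then show ?thesis using True by (simp add: sum_distrib_left)
  next
    case False
    then have "x = y \<or> eta x = 0" by auto
    then show ?thesis by auto
  qed
  have "gen L d (\<lambda>\<xi>. \<Prod>k<n. Fk L N (G k) \<xi>) eta =
      (\<Sum>x<L. \<Sum>y<L. \<Sum>S\<in>?P. if x \<noteq> y then real (eta x) * (d + real (eta y)) *
      ((\<Prod>k\<in>S. Dl (G k) N eta x y) * (\<Prod>k\<in>{..<n} - S. Fk L N (G k) eta)) else 0)"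
    unfolding gen_def by (intro sum.cong refl) (simp add: per)
  also have "\<dots> = (\<Sum>x<L. \<Sum>S\<in>?P. \<Sum>y<L. if x \<noteq> y then real (eta x) * (d + real (eta y)) *
      ((\<Prod>k\<in>S. Dl (G k) N eta x y) * (\<Prod>k\<in>{..<n} - S. Fk L N (G k) eta)) else 0)"
    by (intro sum.cong refl) (rule sum.swap)
  also have "\<dots> = (\<Sum>S\<in>?P. Qs L N eta d n G S)"
    unfolding Qs_def by (rule sum.swap)
  finally show ?thesis .
qed


lemma dsum_mult_right:
  "(\<Sum>x\<in>A. \<Sum>y\<in>B. if c x y then a x y * P else 0) = (\<Sum>x\<in>A. \<Sum>y\<in>B. if c x y then a x y else 0) * (P::real)"
  unfolding sum_distrib_right by (intro sum.cong refl) simp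

definition Ek :: "nat \<Rightarrow> nat \<Rightarrow> (nat \<Rightarrow> nat) \<Rightarrow> real \<Rightarrow> (real \<Rightarrow> real) \<Rightarrow> (real \<Rightarrow> real) \<Rightarrow> real" where
  "Ek L N eta \<theta> g1 g2 = (\<Sum>x<L. real (eta x) / real N * (1 - real (eta x) / real N) * g2 (real (eta x) / real N)
         - \<theta> * (real (eta x) / real N) * g1 (real (eta x) / real N)) + \<theta> * g1 0"
definition Ck :: "nat \<Rightarrow> nat \<Rightarrow> (nat \<Rightarrow> nat) \<Rightarrow> (real \<Rightarrow> real) \<Rightarrow> (real \<Rightarrow> real) \<Rightarrow> real" where
  "Ck L N eta ga gb = (\<Sum>x<L. real (eta x) / real N * (ga (real (eta x) / real N) * gb (real (eta x) / real N)))
       - (\<Sum>x<L. real (eta x) / real N * ga (real (eta x) / real N)) * (\<Sum>x<L. real (eta x) / real N * gb (real (eta x) / real N))"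

context
  fixes L N :: nat and eta :: "nat \<Rightarrow> nat" and n :: nat and G G1 G2 G3 :: "nat \<Rightarrow> real \<Rightarrow> real"
    and M d \<theta> :: real
  assumes om: "eta \<in> Omega L N" and N: "0 < N"
    and dG: "\<And>k. k < n \<Longrightarrow> der3 (G k) (G1 k) (G2 k) (G3 k)"
    and bG: "\<And>k. k < n \<Longrightarrow> bnd M (G k) (G1 k) (G2 k) (G3 k)"
    and M1': "1 \<le> M"
    and d0: "0 \<le> d" and th: "0 \<le> \<theta>"
begin

lemma Fbnd: "k < n \<Longrightarrow> \<bar>Fk L N (G k) eta\<bar> \<le> M"
proof -
  assume k: "k < n"
  have "\<bar>(\<Sum>z<L. G k (real (eta z) / real N)) - (\<Sum>z<L. 0)\<bar> \<le> (\<Sum>z<L. M * (real (eta z) / real N))"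
  proof (rule sum_err)
    fix z assume "z \<in> {..<L}"
    then show "\<bar>G k (real (eta z) / real N) - 0\<bar> \<le> M * (real (eta z) / real N)"
      using b0[OF dG[OF k] bG[OF k] N in01[OF dG[OF k] bG[OF k] N le_N[OF om N]]] by simp
  qed simp
  also have "\<dots> = M * (\<Sum>z<L. real (eta z) / real N)" by (rule sum_distrib_left[symmetric])
  also have "\<dots> = M" using sumu[OF om N] by simp
  finally show ?thesis by (simp add: Fk_def)
qed

lemma Pbnd: "S \<subseteq> {..<n} \<Longrightarrow> \<bar>\<Prod>k\<in>S. Fk L N (G k) eta\<bar> \<le> M ^ n"
proof -
  assume S: "S \<subseteq> {..<n}"
  have "\<bar>\<Prod>k\<in>S. Fk L N (G k) eta\<bar> = (\<Prod>k\<in>S. \<bar>Fk L N (G k) eta\<bar>)" by (rule abs_prod)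
  also have "\<dots> \<le> M ^ n"
    by (rule prod_le_power) (use S Fbnd M1' card_mono[OF _ S] in auto)
  finally show ?thesis .
qed

lemma Dlbnd: assumes "k < n" "x < L" "y < L" "x \<noteq> y" "1 \<le> eta x"
  shows "\<bar>Dl (G k) N eta x y\<bar> \<le> 4 * M / real N"
proof -
  have c: "eta x \<le> N" "eta y + 1 \<le> N" using le_N[OF om N, of x] le_N2[OF om N, of x y] assms by auto
  show ?thesis using S4m[OF dG[OF assms(1)] bG[OF assms(1)] N assms(5) c(1)] S4p[OF dG[OF assms(1)] bG[OF assms(1)] N c(2)]
    unfolding Dl_def by linarith
qed

lemma wsum: "(\<Sum>x<L. \<Sum>y<L. if x \<noteq> y then real (eta x) * (d + real (eta y)) else 0) \<le> real N * (d * real L + real N)"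
proof -
  have "(\<Sum>x<L. \<Sum>y<L. if x \<noteq> y then real (eta x) * (d + real (eta y)) else 0)
     = (\<Sum>x<L. real (eta x)) * (\<Sum>y<L. d + real (eta y)) - (\<Sum>x<L. real (eta x) * (d + real (eta x)))"
    by (rule pairsum) simp
  also have "\<dots> \<le> (\<Sum>x<L. real (eta x)) * (\<Sum>y<L. d + real (eta y))"
    using d0 by (simp add: sum_nonneg)
  also have "\<dots> = real N * (d * real L + real N)" using sumN[OF om N] by (simp add: sum.distrib)
  finally show ?thesis .
qed

lemma Q3: assumes S: "S \<subseteq> {..<n}" "3 \<le> card S"
  shows "\<bar>Qs L N eta d n G S\<bar> \<le> (4 * M) ^ n * M ^ n * (1 / real N + d * real L / real N)"
proof -
  have Nr: "real N \<ge> 1" using N by simp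
  have fS: "finite S" using S finite_subset by blast
  have cn: "card S \<le> n" using card_mono[OF _ S(1)] by simp
  define B where "B = (4 * M) ^ n * M ^ n / real N ^ 3"
  have B0: "0 \<le> B" using M1' by (simp add: B_def)
  have "\<bar>Qs L N eta d n G S - (\<Sum>x<L. \<Sum>y<L. 0)\<bar> \<le>
     (\<Sum>x<L. \<Sum>y<L. (if x \<noteq> y then real (eta x) * (d + real (eta y)) else 0) * B)"
    unfolding Qs_def
  proof (rule sum_err2)
    fix x y assume xy: "x \<in> {..<L}" "y \<in> {..<L}"
    show "\<bar>(if x \<noteq> y then real (eta x) * (d + real (eta y)) *
      ((\<Prod>k\<in>S. Dl (G k) N eta x y) * (\<Prod>k\<in>{..<n} - S. Fk L N (G k) eta)) else 0) - 0\<bar>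
      \<le> (if x \<noteq> y then real (eta x) * (d + real (eta y)) else 0) * B"
    proof (cases "x \<noteq> y \<and> 1 \<le> eta x")
      case True
      have p1: "\<bar>\<Prod>k\<in>S. Dl (G k) N eta x y\<bar> \<le> (4 * M) ^ n / real N ^ 3"
      proof -
        have "\<bar>\<Prod>k\<in>S. Dl (G k) N eta x y\<bar> = (\<Prod>k\<in>S. \<bar>Dl (G k) N eta x y\<bar>)" by (rule abs_prod)
        also have "\<dots> \<le> (\<Prod>k\<in>S. 4 * M / real N)"
          by (rule prod_mono) (use Dlbnd True xy S(1) in auto)
        also have "\<dots> = (4 * M) ^ card S / real N ^ card S" by (simp add: power_divide)
        also have "\<dots> \<le> (4 * M) ^ n / real N ^ 3"
        proof (rule frac_le)
          show "(4 * M) ^ card S \<le> (4 * M) ^ n" using M1' cn by (intro power_increasing) auto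
          show "real N ^ 3 \<le> real N ^ card S" using Nr S(2) by (intro power_increasing) auto
        qed (use M1' N in auto)
        finally show ?thesis .
      qed
      have p2: "\<bar>\<Prod>k\<in>{..<n} - S. Fk L N (G k) eta\<bar> \<le> M ^ n" by (rule Pbnd) auto
      have "\<bar>(\<Prod>k\<in>S. Dl (G k) N eta x y) * (\<Prod>k\<in>{..<n} - S. Fk L N (G k) eta)\<bar> \<le> (4 * M) ^ n / real N ^ 3 * M ^ n"
        unfolding abs_mult by (rule mult_mono[OF p1 p2]) (use M1' in auto)
      also have "\<dots> = B" by (simp add: B_def)
      finally have pb: "\<bar>(\<Prod>k\<in>S. Dl (G k) N eta x y) * (\<Prod>k\<in>{..<n} - S. Fk L N (G k) eta)\<bar> \<le> B" .
      have w0: "0 \<le> real (eta x) * (d + real (eta y))" using d0 by simp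
      have "\<bar>real (eta x) * (d + real (eta y)) * ((\<Prod>k\<in>S. Dl (G k) N eta x y) * (\<Prod>k\<in>{..<n} - S. Fk L N (G k) eta))\<bar>
         = real (eta x) * (d + real (eta y)) * \<bar>(\<Prod>k\<in>S. Dl (G k) N eta x y) * (\<Prod>k\<in>{..<n} - S. Fk L N (G k) eta)\<bar>"
        using w0 by (simp only: abs_mult[of "real (eta x) * (d + real (eta y))"] abs_of_nonneg)
      then show ?thesis using True mult_left_mono[OF pb w0] by simp
    next
      case False
      then have "x = y \<or> eta x = 0" by auto
      then show ?thesis using B0 d0 by auto
    qed
  qed auto
  also have "\<dots> = (\<Sum>x<L. \<Sum>y<L. if x \<noteq> y then real (eta x) * (d + real (eta y)) else 0) * B"
    by (simp add: sum_distrib_right)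
  also have "\<dots> \<le> real N * (d * real L + real N) * B"
    by (rule mult_right_mono[OF wsum B0])
  also have "\<dots> = (4 * M) ^ n * M ^ n * (d * real L / real N ^ 2 + 1 / real N)"
    using N by (simp add: B_def field_simps power2_eq_square power3_eq_cube)
  also have "\<dots> \<le> (4 * M) ^ n * M ^ n * (1 / real N + d * real L / real N)"
  proof (rule mult_left_mono)
    have "d * real L / real N ^ 2 \<le> d * real L / real N"
      using Nr d0 by (intro divide_left_mono) (auto simp: power2_eq_square)
    then show "d * real L / real N ^ 2 + 1 / real N \<le> 1 / real N + d * real L / real N" by simp
  qed (use M1' in simp)
  finally show ?thesis by simp
qed

lemma Qs1: "Qs L N eta d n G {k} = (\<Sum>x<L. \<Sum>y<L. if x \<noteq> y then real (eta x) * (d + real (eta y)) *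
      (Dm (G k) N (eta x) + Dp (G k) N (eta y)) else 0) * (\<Prod>j\<in>{..<n} - {k}. Fk L N (G j) eta)"
  unfolding Qs_def dsum_mult_right[symmetric] by (intro sum.cong refl) (simp add: Dl_def)

lemma Qs2: "k \<noteq> l \<Longrightarrow> Qs L N eta d n G {k, l} = (\<Sum>x<L. \<Sum>y<L. if x \<noteq> y then real (eta x) * (d + real (eta y)) *
      ((Dm (G k) N (eta x) + Dp (G k) N (eta y)) * (Dm (G l) N (eta x) + Dp (G l) N (eta y))) else 0)
      * (\<Prod>j\<in>{..<n} - {k, l}. Fk L N (G j) eta)"
  unfolding Qs_def dsum_mult_right[symmetric] by (intro sum.cong refl) (simp add: Dl_def)

lemma main_prod:
  "\<bar>gen L d (\<lambda>\<xi>. \<Prod>k<n. Fk L N (G k) \<xi>) eta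
     - (2 * (\<Sum>k<n. \<Sum>l<n. if k < l then Ck L N eta (G1 k) (G1 l) * (\<Prod>j\<in>{..<n} - {k, l}. Fk L N (G j) eta) else 0)
        + (\<Sum>k<n. Ek L N eta \<theta> (G1 k) (G2 k) * (\<Prod>j\<in>{..<n} - {k}. Fk L N (G j) eta)))\<bar>
   \<le> (3 * real n * M * M ^ n + 16 * real n ^ 2 * M^2 * M ^ n + 2 ^ n * ((4 * M) ^ n * M ^ n))
      * (1 / real N + \<bar>d * real L - \<theta>\<bar> + d + d * real L / real N)"
proof -
  define A where "A = {..<n}"
  define \<epsilon> where "\<epsilon> = 1 / real N + \<bar>d * real L - \<theta>\<bar> + d + d * real L / real N"
  have eps0: "0 \<le> \<epsilon>" using d0 N by (simp add: \<epsilon>_def)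
  have nn: "0 \<le> 1 / real N" "0 \<le> d * real L / real N" "0 \<le> \<bar>d * real L - \<theta>\<bar>"
    "2 * d * real L / real N = 2 * (d * real L / real N)" "2 / real N = 2 * (1 / real N)" using d0 by simp_all
  have h3: "0 \<le> (a::real) \<Longrightarrow> 0 \<le> b \<Longrightarrow> 0 \<le> c \<Longrightarrow> 0 \<le> e \<Longrightarrow> 2 * a + 2 * c + 3 * e + 2 * b \<le> 3 * (a + c + e + b)"
    for a b c e by (simp add: algebra_simps)
  have h1: "0 \<le> (a::real) \<Longrightarrow> 0 \<le> b \<Longrightarrow> 0 \<le> c \<Longrightarrow> 0 \<le> e \<Longrightarrow> a + b \<le> a + c + e + b"
    for a b c e by linarith
  have three: "2 / real N + 2 * \<bar>d * real L - \<theta>\<bar> + 3 * d + 2 * d * real L / real N \<le> 3 * \<epsilon>"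
    unfolding \<epsilon>_def nn(4,5) by (rule h3) (use nn d0 in auto)
  have one: "1 / real N + d * real L / real N \<le> \<epsilon>"
    unfolding \<epsilon>_def by (rule h1) (use nn d0 in auto)
  have Mn: "0 \<le> M ^ n" using M1' by simp
  define P where "P = Pow A - {{}}"
  define P1 where "P1 = (\<lambda>k. {k}) ` A"
  define PP where "PP = {p \<in> A \<times> A. fst p < snd p}"
  define P2 where "P2 = (\<lambda>p. {fst p, snd p}) ` PP"
  define P3 where "P3 = {S \<in> P. 3 \<le> card S}"
  have fA: "finite A" by (simp add: A_def)
  have fP: "finite P" by (simp add: P_def A_def)
  have Pdec: "P = P1 \<union> P2 \<union> P3"
  proof
    show "P \<subseteq> P1 \<union> P2 \<union> P3"
    proof
      fix S assume S: "S \<in> P"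
      then have SA: "S \<subseteq> A" "S \<noteq> {}" by (auto simp: P_def)
      then have fS: "finite S" using fA finite_subset by blast
      then have c: "card S \<noteq> 0" using SA by simp
      consider "card S = 1" | "card S = 2" | "3 \<le> card S" using c by linarith
      then show "S \<in> P1 \<union> P2 \<union> P3"
      proof cases
        case 1
        then obtain k where "S = {k}" using card_1_singleton_iff by (metis One_nat_def)
        then show ?thesis using SA by (auto simp: P1_def)
      next
        case 2
        then obtain a b where ab: "S = {a, b}" "a \<noteq> b" using card_2_iff by metis
        have "(min a b, max a b) \<in> PP" using ab SA by (auto simp: PP_def min_def max_def)
        moreover have "S = {fst (min a b, max a b), snd (min a b, max a b)}" using ab by (auto simp: min_def max_def)
        ultimately show ?thesis unfolding P2_def by blast
      next
        case 3
        then show ?thesis using S by (auto simp: P3_def)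
      qed
    qed
    show "P1 \<union> P2 \<union> P3 \<subseteq> P" by (auto simp: P1_def P2_def PP_def P3_def P_def)
  qed
  have c1: "S \<in> P1 \<Longrightarrow> card S = 1" for S by (auto simp: P1_def)
  have c2: "S \<in> P2 \<Longrightarrow> card S = 2" for S by (auto simp: P2_def PP_def)
  have fP1: "finite P1" "finite P2" "finite P3" using fP Pdec by (auto intro: finite_subset)
  have sumsplit: "(\<Sum>S\<in>P. Qs L N eta d n G S) = (\<Sum>S\<in>P1. Qs L N eta d n G S) + (\<Sum>S\<in>P2. Qs L N eta d n G S)
      + (\<Sum>S\<in>P3. Qs L N eta d n G S)"
  proof -
    have d12: "P1 \<inter> P2 = {}" using c1 c2 by fastforce
    have d3: "(P1 \<union> P2) \<inter> P3 = {}" using c1 c2 by (fastforce simp: P3_def)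
    show ?thesis unfolding Pdec
      by (simp add: sum.union_disjoint fP1 d12 d3)
  qed
  have s1: "(\<Sum>S\<in>P1. Qs L N eta d n G S) = (\<Sum>k\<in>A. Qs L N eta d n G {k})"
    unfolding P1_def by (rule sum.reindex_cong[where l="\<lambda>k. {k}"]) (auto simp: inj_on_def)
  have s2: "(\<Sum>S\<in>P2. Qs L N eta d n G S) = (\<Sum>k\<in>A. \<Sum>l\<in>A. if k < l then Qs L N eta d n G {k, l} else 0)"
  proof -
    have inj: "inj_on (\<lambda>p. {fst p, snd p}) PP"
      by (auto simp: inj_on_def PP_def doubleton_eq_iff)
    have "(\<Sum>S\<in>P2. Qs L N eta d n G S) = (\<Sum>p\<in>PP. Qs L N eta d n G {fst p, snd p})"
      unfolding P2_def by (rule sum.reindex_cong[OF inj]) auto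
    also have "\<dots> = (\<Sum>p\<in>A \<times> A. if fst p < snd p then Qs L N eta d n G {fst p, snd p} else 0)"
      unfolding PP_def by (rule sum.inter_filter) (simp add: fA)
    also have "\<dots> = (\<Sum>k\<in>A. \<Sum>l\<in>A. if k < l then Qs L N eta d n G {k, l} else 0)"
      by (simp add: sum.cartesian_product case_prod_unfold)
    finally show ?thesis .
  qed
  have b1: "\<bar>(\<Sum>k\<in>A. Qs L N eta d n G {k}) - (\<Sum>k\<in>A. Ek L N eta \<theta> (G1 k) (G2 k) * (\<Prod>j\<in>{..<n} - {k}. Fk L N (G j) eta))\<bar>
     \<le> (\<Sum>k\<in>A. 3 * M * \<epsilon> * M ^ n)"
  proof (rule sum_err[OF fA])
    fix k assume k: "k \<in> A"
    then have kn: "k < n" by (simp add: A_def)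
    have t: "\<bar>(\<Sum>x<L. \<Sum>y<L. if x \<noteq> y then real (eta x) * (d + real (eta y)) *
      (Dm (G k) N (eta x) + Dp (G k) N (eta y)) else 0) - Ek L N eta \<theta> (G1 k) (G2 k)\<bar> \<le> 3 * M * \<epsilon>"
    proof -
      have "M * (2 / real N + 2 * \<bar>d * real L - \<theta>\<bar> + 3 * d + 2 * d * real L / real N) \<le> M * (3 * \<epsilon>)"
        by (rule mult_left_mono[OF three]) (use M1' in simp)
      then show ?thesis using T1_main[OF om N dG[OF kn] bG[OF kn] d0 th] unfolding Ek_def by simp
    qed
    have p: "\<bar>\<Prod>j\<in>{..<n} - {k}. Fk L N (G j) eta\<bar> \<le> M ^ n" by (rule Pbnd) auto
    show "\<bar>Qs L N eta d n G {k} - Ek L N eta \<theta> (G1 k) (G2 k) * (\<Prod>j\<in>{..<n} - {k}. Fk L N (G j) eta)\<bar> \<le> 3 * M * \<epsilon> * M ^ n"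
      unfolding Qs1 left_diff_distrib[symmetric] abs_mult
      by (rule mult_mono[OF t p]) (use M1' eps0 in auto)
  qed
  have b2: "\<bar>(\<Sum>k\<in>A. \<Sum>l\<in>A. if k < l then Qs L N eta d n G {k, l} else 0)
       - (\<Sum>k\<in>A. \<Sum>l\<in>A. if k < l then 2 * Ck L N eta (G1 k) (G1 l) * (\<Prod>j\<in>{..<n} - {k, l}. Fk L N (G j) eta) else 0)\<bar>
     \<le> (\<Sum>k\<in>A. \<Sum>l\<in>A. 16 * M^2 * \<epsilon> * M ^ n)"
  proof (rule sum_err2[OF fA fA])
    fix k l assume kl: "k \<in> A" "l \<in> A"
    show "\<bar>(if k < l then Qs L N eta d n G {k, l} else 0) -
       (if k < l then 2 * Ck L N eta (G1 k) (G1 l) * (\<Prod>j\<in>{..<n} - {k, l}. Fk L N (G j) eta) else 0)\<bar>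
       \<le> 16 * M^2 * \<epsilon> * M ^ n"
    proof (cases "k < l")
      case False then show ?thesis using M1' eps0 by simp
    next
      case True
      have kn: "k < n" "l < n" using kl by (auto simp: A_def)
      have t: "\<bar>(\<Sum>x<L. \<Sum>y<L. if x \<noteq> y then real (eta x) * (d + real (eta y)) *
        ((Dm (G k) N (eta x) + Dp (G k) N (eta y)) * (Dm (G l) N (eta x) + Dp (G l) N (eta y))) else 0)
        - 2 * Ck L N eta (G1 k) (G1 l)\<bar> \<le> 16 * M^2 * \<epsilon>"
      proof -
        have "16 * M^2 * (1 / real N + d * real L / real N) \<le> 16 * M^2 * \<epsilon>"
          by (rule mult_left_mono[OF one]) simp
        then show ?thesis using T2_main[OF om N dG[OF kn(1)] bG[OF kn(1)] dG[OF kn(2)] bG[OF kn(2)] d0] unfolding Ck_def by simp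
      qed
      have p: "\<bar>\<Prod>j\<in>{..<n} - {k, l}. Fk L N (G j) eta\<bar> \<le> M ^ n" by (rule Pbnd) auto
      have "\<bar>Qs L N eta d n G {k, l} - 2 * Ck L N eta (G1 k) (G1 l) * (\<Prod>j\<in>{..<n} - {k, l}. Fk L N (G j) eta)\<bar>
          \<le> 16 * M^2 * \<epsilon> * M ^ n"
        unfolding Qs2[OF less_imp_neq[OF True]] left_diff_distrib[symmetric] abs_mult
        by (rule mult_mono[OF t p]) (use M1' eps0 in auto)
      then show ?thesis using True by simp
    qed
  qed
  have b3: "\<bar>(\<Sum>S\<in>P3. Qs L N eta d n G S)\<bar> \<le> 2 ^ n * ((4 * M) ^ n * M ^ n * \<epsilon>)"
  proof -
    have "\<bar>(\<Sum>S\<in>P3. Qs L N eta d n G S) - (\<Sum>S\<in>P3. 0)\<bar> \<le> (\<Sum>S\<in>P3. (4 * M) ^ n * M ^ n * \<epsilon>)"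
    proof (rule sum_err[OF fP1(3)])
      fix S assume S: "S \<in> P3"
      then have SS: "S \<subseteq> {..<n}" "3 \<le> card S" by (auto simp: P3_def P_def A_def)
      have "(4 * M) ^ n * M ^ n * (1 / real N + d * real L / real N) \<le> (4 * M) ^ n * M ^ n * \<epsilon>"
        by (rule mult_left_mono[OF one]) (use M1' in simp)
      then show "\<bar>Qs L N eta d n G S - 0\<bar> \<le> (4 * M) ^ n * M ^ n * \<epsilon>" using order_trans[OF Q3[OF SS]] by simp
    qed
    also have "\<dots> = real (card P3) * ((4 * M) ^ n * M ^ n * \<epsilon>)" by simp
    also have "\<dots> \<le> 2 ^ n * ((4 * M) ^ n * M ^ n * \<epsilon>)"
    proof (rule mult_right_mono)
      have "card P3 \<le> card (Pow A)" by (rule card_mono) (auto simp: P3_def P_def fA)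
      then have "card P3 \<le> 2 ^ n" by (simp add: card_Pow fA A_def)
      then show "real (card P3) \<le> 2 ^ n" by (metis of_nat_le_iff of_nat_numeral of_nat_power)
    qed (use M1' eps0 in auto)
    finally show ?thesis by simp
  qed
  have LPe: "2 * (\<Sum>k<n. \<Sum>l<n. if k < l then Ck L N eta (G1 k) (G1 l) * (\<Prod>j\<in>{..<n} - {k, l}. Fk L N (G j) eta) else 0)
    = (\<Sum>k\<in>A. \<Sum>l\<in>A. if k < l then 2 * Ck L N eta (G1 k) (G1 l) * (\<Prod>j\<in>{..<n} - {k, l}. Fk L N (G j) eta) else 0)"
    unfolding A_def sum_distrib_left by (intro sum.cong refl) simp
  have "gen L d (\<lambda>\<xi>. \<Prod>k<n. Fk L N (G k) \<xi>) eta = (\<Sum>S\<in>P. Qs L N eta d n G S)"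
    unfolding genexp P_def A_def ..
  then have g: "gen L d (\<lambda>\<xi>. \<Prod>k<n. Fk L N (G k) \<xi>) eta =
     (\<Sum>k\<in>A. Qs L N eta d n G {k}) + (\<Sum>k\<in>A. \<Sum>l\<in>A. if k < l then Qs L N eta d n G {k, l} else 0)
      + (\<Sum>S\<in>P3. Qs L N eta d n G S)" using sumsplit s1 s2 by simp
  have "\<bar>gen L d (\<lambda>\<xi>. \<Prod>k<n. Fk L N (G k) \<xi>) eta
     - (2 * (\<Sum>k<n. \<Sum>l<n. if k < l then Ck L N eta (G1 k) (G1 l) * (\<Prod>j\<in>{..<n} - {k, l}. Fk L N (G j) eta) else 0)
        + (\<Sum>k<n. Ek L N eta \<theta> (G1 k) (G2 k) * (\<Prod>j\<in>{..<n} - {k}. Fk L N (G j) eta)))\<bar>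
     \<le> (\<Sum>k\<in>A. 3 * M * \<epsilon> * M ^ n) + (\<Sum>k\<in>A. \<Sum>l\<in>A. 16 * M^2 * \<epsilon> * M ^ n) + 2 ^ n * ((4 * M) ^ n * M ^ n * \<epsilon>)"
    unfolding g LPe using b1 b2 b3 unfolding A_def by linarith
  also have "\<dots> = (3 * real n * M * M ^ n + 16 * real n ^ 2 * M^2 * M ^ n + 2 ^ n * ((4 * M) ^ n * M ^ n)) * \<epsilon>"
    by (simp add: A_def algebra_simps power2_eq_square)
  finally show ?thesis unfolding \<epsilon>_def .
qed

end


lemma pl_nth: "prod_list (map f xs) = (\<Prod>k<length xs. f (xs ! k))"
  by (induction xs) (simp_all add: prod.lessThan_Suc_shift del: prod.lessThan_Suc)

lemma bnd_mono: "bnd M G G1 G2 G3 \<Longrightarrow> M \<le> M' \<Longrightarrow> bnd M' G G1 G2 G3"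
  unfolding bnd_def
proof (intro conjI ballI, goal_cases)
  case 1 then show ?case by simp
next
  case (2 x)
  then have "\<bar>G x\<bar> \<le> M * x" by blast
  also have "\<dots> \<le> M' * x" using 2 by (intro mult_right_mono) auto
  finally show ?case .
next
  case (3 x) then show ?case by force
next
  case (4 x) then show ?case by force
next
  case (5 x) then show ?case by force
qed

lemma emp_Fk: "emp L N \<xi> h = Fk L N (\<lambda>v. v * h v) \<xi>"
  by (simp add: emp_def Fk_def)

lemma hs_bound:
  assumes hs: "\<forall>h\<in>set hs. C3_01 h" and th: "0 \<le> \<theta>"
  shows "\<exists>K. \<forall>L N eta d. eta \<in> Omega L N \<longrightarrow> 0 < N \<longrightarrow> 0 \<le> d \<longrightarrow>
     \<bar>gen L d (\<lambda>\<xi>. prod_list (map (emp L N \<xi>) hs)) eta - Lprod \<theta> hs (emp L N eta)\<bar>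
       \<le> K * (1 / real N + \<bar>d * real L - \<theta>\<bar> + d + d * real L / real N)"
proof -
  define n where "n = length hs"
  define G where "G k = (\<lambda>v. v * (hs ! k) v)" for k
  have "\<forall>k. \<exists>G1 G2 G3 M. k < n \<longrightarrow> (der3 (G k) G1 G2 G3 \<and> bnd M (G k) G1 G2 G3 \<and>
     (\<forall>z\<in>{0..1}. Bop (hs ! k) z = G1 z \<and>
        z * Aop \<theta> (hs ! k) z = z * (1 - z) * G2 z - \<theta> * z * G1 z + \<theta> * z * G1 0))"
  proof
    fix k
    show "\<exists>G1 G2 G3 M. k < n \<longrightarrow> (der3 (G k) G1 G2 G3 \<and> bnd M (G k) G1 G2 G3 \<and>
     (\<forall>z\<in>{0..1}. Bop (hs ! k) z = G1 z \<and>
        z * Aop \<theta> (hs ! k) z = z * (1 - z) * G2 z - \<theta> * z * G1 z + \<theta> * z * G1 0))"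
    proof (cases "k < n")
      case True
      then have "C3_01 (hs ! k)" using hs by (simp add: n_def)
      from C3_good[OF this, of \<theta>] show ?thesis unfolding G_def by blast
    qed simp
  qed
  then obtain G1 G2 G3 Mf where GG: "\<And>k. k < n \<Longrightarrow> der3 (G k) (G1 k) (G2 k) (G3 k) \<and> bnd (Mf k) (G k) (G1 k) (G2 k) (G3 k) \<and>
     (\<forall>z\<in>{0..1}. Bop (hs ! k) z = G1 k z \<and>
        z * Aop \<theta> (hs ! k) z = z * (1 - z) * G2 k z - \<theta> * z * G1 k z + \<theta> * z * G1 k 0)"
    by metis
  define M where "M = 1 + (\<Sum>k<n. Mf k)"
  have Mf1: "k < n \<Longrightarrow> 1 \<le> Mf k" for k using GG[of k] by (simp add: bnd_def)
  have Mf0: "j < n \<Longrightarrow> 0 \<le> Mf j" for j using Mf1[of j] by linarith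
  have MfM: "k < n \<Longrightarrow> Mf k \<le> M" for k
  proof -
    assume k: "k < n"
    have "Mf k \<le> (\<Sum>k<n. Mf k)" by (rule member_le_sum) (use k Mf0 in auto)
    then show ?thesis by (simp add: M_def)
  qed
  have "0 \<le> (\<Sum>k<n. Mf k)" by (rule sum_nonneg) (use Mf0 in auto)
  then have M1: "1 \<le> M" by (simp add: M_def)
  have dG: "k < n \<Longrightarrow> der3 (G k) (G1 k) (G2 k) (G3 k)" for k using GG by blast
  have bG: "k < n \<Longrightarrow> bnd M (G k) (G1 k) (G2 k) (G3 k)" for k using GG[of k] bnd_mono MfM by blast
  define K where "K = 3 * real n * M * M ^ n + 16 * real n ^ 2 * M^2 * M ^ n + 2 ^ n * ((4 * M) ^ n * M ^ n)"
  show ?thesis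
  proof (intro exI allI impI)
    fix L N eta d assume om: "eta \<in> Omega L N" and N: "0 < N" and d0: "0 \<le> (d::real)"
    have u01: "x < L \<Longrightarrow> real (eta x) / real N \<in> {0..1}" for x
      using le_N[OF om N, of x] N by (auto simp: divide_simps)
    have sumu': "(\<Sum>x<L. real (eta x) / real N) = 1" by (rule sumu[OF om N])
    have genE: "gen L d (\<lambda>\<xi>. prod_list (map (emp L N \<xi>) hs)) eta = gen L d (\<lambda>\<xi>. \<Prod>k<n. Fk L N (G k) \<xi>) eta"
      by (simp add: pl_nth emp_Fk G_def n_def)
    have Bk: "k < n \<Longrightarrow> emp L N eta (Bop (hs ! k)) = (\<Sum>x<L. real (eta x) / real N * G1 k (real (eta x) / real N))" for k
      unfolding emp_def using GG u01 by (intro sum.cong refl) auto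
    have BBk: "k < n \<Longrightarrow> l < n \<Longrightarrow> emp L N eta (\<lambda>z. Bop (hs ! k) z * Bop (hs ! l) z)
       = (\<Sum>x<L. real (eta x) / real N * (G1 k (real (eta x) / real N) * G1 l (real (eta x) / real N)))" for k l
      unfolding emp_def using GG u01 by (intro sum.cong refl) auto
    have Ak: "k < n \<Longrightarrow> emp L N eta (Aop \<theta> (hs ! k)) = Ek L N eta \<theta> (G1 k) (G2 k)" for k
    proof -
      assume k: "k < n"
      have "emp L N eta (Aop \<theta> (hs ! k)) = (\<Sum>x<L. real (eta x) / real N * (1 - real (eta x) / real N) * G2 k (real (eta x) / real N)
         - \<theta> * (real (eta x) / real N) * G1 k (real (eta x) / real N) + \<theta> * (real (eta x) / real N) * G1 k 0)"
        unfolding emp_def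
      proof (intro sum.cong refl)
        fix x assume "x \<in> {..<L}"
        then have "real (eta x) / real N \<in> {0..1}" using u01 by simp
        then show "real (eta x) / real N * Aop \<theta> (hs ! k) (real (eta x) / real N) =
          real (eta x) / real N * (1 - real (eta x) / real N) * G2 k (real (eta x) / real N)
         - \<theta> * (real (eta x) / real N) * G1 k (real (eta x) / real N) + \<theta> * (real (eta x) / real N) * G1 k 0"
          using GG[OF k] by blast
      qed
      also have "\<dots> = (\<Sum>x<L. real (eta x) / real N * (1 - real (eta x) / real N) * G2 k (real (eta x) / real N)
         - \<theta> * (real (eta x) / real N) * G1 k (real (eta x) / real N)) + (\<Sum>x<L. \<theta> * (real (eta x) / real N) * G1 k 0)"
        by (rule sum.distrib)
      also have "(\<Sum>x<L. \<theta> * (real (eta x) / real N) * G1 k 0) = \<theta> * G1 k 0 * (\<Sum>x<L. real (eta x) / real N)"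
        by (simp add: sum_distrib_left algebra_simps)
      also have "\<dots> = \<theta> * G1 k 0" using sumu' by simp
      also have "(\<Sum>x<L. real (eta x) / real N * (1 - real (eta x) / real N) * G2 k (real (eta x) / real N)
         - \<theta> * (real (eta x) / real N) * G1 k (real (eta x) / real N)) + \<theta> * G1 k 0 = Ek L N eta \<theta> (G1 k) (G2 k)"
        unfolding Ek_def ..
      finally show ?thesis .
    qed
    have Fk': "emp L N eta (hs ! j) = Fk L N (G j) eta" for j by (simp add: emp_Fk G_def)
    have LE: "Lprod \<theta> hs (emp L N eta) =
      2 * (\<Sum>k<n. \<Sum>l<n. if k < l then Ck L N eta (G1 k) (G1 l) * (\<Prod>j\<in>{..<n} - {k, l}. Fk L N (G j) eta) else 0)
        + (\<Sum>k<n. Ek L N eta \<theta> (G1 k) (G2 k) * (\<Prod>j\<in>{..<n} - {k}. Fk L N (G j) eta))"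
      unfolding Lprod_def n_def[symmetric] Fk'
      by (intro arg_cong2[where f="(+)"] arg_cong2[where f="(*)"] refl sum.cong)
         (auto simp: Bk BBk Ak Ck_def)
    show "\<bar>gen L d (\<lambda>\<xi>. prod_list (map (emp L N \<xi>) hs)) eta - Lprod \<theta> hs (emp L N eta)\<bar>
       \<le> K * (1 / real N + \<bar>d * real L - \<theta>\<bar> + d + d * real L / real N)"
      unfolding genE LE K_def by (rule main_prod[OF om N dG bG M1 d0 th])
  qed
qed


lemma gen_lin: "gen L d (\<lambda>\<xi>. a * f \<xi> + g \<xi>) eta = a * gen L d f eta + gen L d g eta"
  unfolding gen_def sum_distrib_left sum.distrib[symmetric]
  by (intro sum.cong refl) (simp add: algebra_simps)

lemma gen_zero: "gen L d (\<lambda>\<xi>. 0) eta = 0"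
  unfolding gen_def by (intro sum.neutral ballI) auto

lemma R_bound:
  assumes "\<forall>(c, hs) \<in> set R. \<forall>h \<in> set hs. C3_01 h" and th: "0 \<le> \<theta>"
  shows "\<exists>K. \<forall>L N eta d. eta \<in> Omega L N \<longrightarrow> 0 < N \<longrightarrow> 0 \<le> d \<longrightarrow>
     \<bar>gen L d (\<lambda>\<xi>. Hrep R (emp L N \<xi>)) eta - Ltheta \<theta> R (emp L N eta)\<bar>
       \<le> K * (1 / real N + \<bar>d * real L - \<theta>\<bar> + d + d * real L / real N)"
  using assms(1)
proof (induction R)
  case Nil
  show ?case by (intro exI[of _ 0] allI impI) (simp add: Hrep_def Ltheta_def gen_zero)
next
  case (Cons p R)
  obtain c hs where p: "p = (c, hs)" by fastforce
  from Cons.prems p have hs: "\<forall>h\<in>set hs. C3_01 h" by auto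
  from Cons.prems have "\<forall>(c, hs) \<in> set R. \<forall>h \<in> set hs. C3_01 h" by auto
  from Cons.IH[OF this] obtain K2 where K2: "\<forall>L N eta d. eta \<in> Omega L N \<longrightarrow> 0 < N \<longrightarrow> 0 \<le> d \<longrightarrow>
     \<bar>gen L d (\<lambda>\<xi>. Hrep R (emp L N \<xi>)) eta - Ltheta \<theta> R (emp L N eta)\<bar>
       \<le> K2 * (1 / real N + \<bar>d * real L - \<theta>\<bar> + d + d * real L / real N)" by blast
  from hs_bound[OF hs th] obtain K1 where K1: "\<forall>L N eta d. eta \<in> Omega L N \<longrightarrow> 0 < N \<longrightarrow> 0 \<le> d \<longrightarrow>
     \<bar>gen L d (\<lambda>\<xi>. prod_list (map (emp L N \<xi>) hs)) eta - Lprod \<theta> hs (emp L N eta)\<bar>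
       \<le> K1 * (1 / real N + \<bar>d * real L - \<theta>\<bar> + d + d * real L / real N)" by blast
  show ?case
  proof (intro exI[of _ "\<bar>c\<bar> * K1 + K2"] allI impI)
    fix L N eta d assume a: "eta \<in> Omega L N" "0 < N" "0 \<le> (d::real)"
    define e where "e = 1 / real N + \<bar>d * real L - \<theta>\<bar> + d + d * real L / real N"
    have H: "(\<lambda>\<xi>. Hrep (p # R) (emp L N \<xi>)) = (\<lambda>\<xi>. c * prod_list (map (emp L N \<xi>) hs) + Hrep R (emp L N \<xi>))"
      by (simp add: Hrep_def p)
    have Lt: "Ltheta \<theta> (p # R) (emp L N eta) = c * Lprod \<theta> hs (emp L N eta) + Ltheta \<theta> R (emp L N eta)"
      by (simp add: Ltheta_def p)
    have b1: "\<bar>gen L d (\<lambda>\<xi>. prod_list (map (emp L N \<xi>) hs)) eta - Lprod \<theta> hs (emp L N eta)\<bar> \<le> K1 * e"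
      using K1 a unfolding e_def by blast
    have b2: "\<bar>gen L d (\<lambda>\<xi>. Hrep R (emp L N \<xi>)) eta - Ltheta \<theta> R (emp L N eta)\<bar> \<le> K2 * e"
      using K2 a unfolding e_def by blast
    have "\<bar>c * (gen L d (\<lambda>\<xi>. prod_list (map (emp L N \<xi>) hs)) eta - Lprod \<theta> hs (emp L N eta))\<bar> \<le> \<bar>c\<bar> * (K1 * e)"
      unfolding abs_mult by (rule mult_left_mono[OF b1]) simp
    then show "\<bar>gen L d (\<lambda>\<xi>. Hrep (p # R) (emp L N \<xi>)) eta - Ltheta \<theta> (p # R) (emp L N eta)\<bar>
       \<le> (\<bar>c\<bar> * K1 + K2) * (1 / real N + \<bar>d * real L - \<theta>\<bar> + d + d * real L / real N)"
      unfolding H Lt gen_lin e_def[symmetric] using b2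
      by (simp add: algebra_simps)
  qed
qed


lemma Omega_ne: "0 < L \<Longrightarrow> Omega L N \<noteq> {}"
proof -
  assume L: "0 < L"
  have "(\<lambda>x. if x = 0 then N else 0) \<in> Omega L N"
    unfolding Omega_def using L by (auto simp: sum.delta)
  then show ?thesis by blast
qed

theorem proposition2p1:
  fixes \<rho> \<theta> :: real and d :: "nat \<Rightarrow> real"
    and R :: "(real \<times> (real \<Rightarrow> real) list) list"
  assumes "0 < \<rho>" and "0 \<le> \<theta>"
    and "\<forall>L. 0 < d L"
    and "(\<lambda>L. d L * real L) \<longlonglongrightarrow> \<theta>"
    and "\<forall>(c, hs) \<in> set R. \<forall>h \<in> set hs. C3_01 h"
  shows "\<forall>Ls Ns :: nat \<Rightarrow> nat.
           filterlim Ls at_top sequentially \<longrightarrow> filterlim Ns at_top sequentially \<longrightarrow>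
           (\<lambda>n. real (Ns n) / real (Ls n)) \<longlonglongrightarrow> \<rho> \<longrightarrow>
           (\<lambda>n. SUP eta \<in> Omega (Ls n) (Ns n).
              \<bar>gen (Ls n) (d (Ls n)) (\<lambda>\<xi>. Hrep R (emp (Ls n) (Ns n) \<xi>)) eta
               - Ltheta \<theta> R (emp (Ls n) (Ns n) eta)\<bar>) \<longlonglongrightarrow> 0"
proof (intro allI impI)
  fix Ls Ns :: "nat \<Rightarrow> nat"
  assume Ls: "filterlim Ls at_top sequentially" and Ns: "filterlim Ns at_top sequentially"
  obtain K where K: "\<forall>L N eta d. eta \<in> Omega L N \<longrightarrow> 0 < N \<longrightarrow> 0 \<le> d \<longrightarrow>
     \<bar>gen L d (\<lambda>\<xi>. Hrep R (emp L N \<xi>)) eta - Ltheta \<theta> R (emp L N eta)\<bar>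
       \<le> K * (1 / real N + \<bar>d * real L - \<theta>\<bar> + d + d * real L / real N)"
    using R_bound[OF assms(5,2)] by blast
  define eps where "eps n = 1 / real (Ns n) + \<bar>d (Ls n) * real (Ls n) - \<theta>\<bar> + d (Ls n) + d (Ls n) * real (Ls n) / real (Ns n)" for n
  have dl: "(\<lambda>n. d (Ls n) * real (Ls n)) \<longlonglongrightarrow> \<theta>"
    using filterlim_compose[OF assms(4) Ls] by simp
  have iN: "(\<lambda>n. 1 / real (Ns n)) \<longlonglongrightarrow> 0"
  proof -
    have "filterlim (\<lambda>n. real (Ns n)) at_top sequentially"
      using filterlim_compose[OF filterlim_real_sequentially Ns] by simp
    from tendsto_inverse_0_at_top[OF this] show ?thesis by (simp add: inverse_eq_divide)
  qed
  have d0lim: "(\<lambda>L. d L) \<longlonglongrightarrow> 0"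
  proof -
    have "(\<lambda>L. d L * real L * inverse (real L)) \<longlonglongrightarrow> \<theta> * 0"
      by (rule tendsto_mult[OF assms(4) lim_inverse_n])
    moreover have "eventually (\<lambda>L. d L * real L * inverse (real L) = d L) sequentially"
      using eventually_gt_at_top[of 0] by eventually_elim simp
    ultimately show ?thesis using Lim_transform_eventually by fastforce
  qed
  have dLs: "(\<lambda>n. d (Ls n)) \<longlonglongrightarrow> 0"
    using filterlim_compose[OF d0lim Ls] by simp
  have abs_lim: "(\<lambda>n. \<bar>d (Ls n) * real (Ls n) - \<theta>\<bar>) \<longlonglongrightarrow> 0"
    using tendsto_rabs[OF tendsto_diff[OF dl tendsto_const[of \<theta>]]] by simp
  have q: "(\<lambda>n. d (Ls n) * real (Ls n) * (1 / real (Ns n))) \<longlonglongrightarrow> \<theta> * 0"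
    by (rule tendsto_mult[OF dl iN])
  have epsl: "eps \<longlonglongrightarrow> 0"
  proof -
    have "(\<lambda>n. 1 / real (Ns n) + \<bar>d (Ls n) * real (Ls n) - \<theta>\<bar> + d (Ls n) + d (Ls n) * real (Ls n) * (1 / real (Ns n)))
        \<longlonglongrightarrow> 0 + 0 + 0 + \<theta> * 0"
      by (intro tendsto_add iN abs_lim dLs q)
    then show ?thesis unfolding eps_def by simp
  qed
  have Keps: "(\<lambda>n. K * eps n) \<longlonglongrightarrow> 0"
    using tendsto_mult_right_zero[OF epsl] by simp
  have ev: "eventually (\<lambda>n. 0 < Ls n \<and> 0 < Ns n) sequentially"
  proof -
    have "eventually (\<lambda>n. 1 \<le> Ls n) sequentially" "eventually (\<lambda>n. 1 \<le> Ns n) sequentially"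
      using Ls Ns by (simp_all add: filterlim_at_top)
    then show ?thesis by eventually_elim auto
  qed
  define S where "S n = (SUP eta \<in> Omega (Ls n) (Ns n).
              \<bar>gen (Ls n) (d (Ls n)) (\<lambda>\<xi>. Hrep R (emp (Ls n) (Ns n) \<xi>)) eta
               - Ltheta \<theta> R (emp (Ls n) (Ns n) eta)\<bar>)" for n
  have bounds: "0 \<le> S n \<and> S n \<le> K * eps n" if n: "0 < Ls n \<and> 0 < Ns n" for n
  proof -
    have ne: "Omega (Ls n) (Ns n) \<noteq> {}" using Omega_ne n by blast
    have dpos: "0 \<le> d (Ls n)" using assms(3) less_imp_le by blast
    have each: "\<bar>gen (Ls n) (d (Ls n)) (\<lambda>\<xi>. Hrep R (emp (Ls n) (Ns n) \<xi>)) eta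
               - Ltheta \<theta> R (emp (Ls n) (Ns n) eta)\<bar> \<le> K * eps n" if "eta \<in> Omega (Ls n) (Ns n)" for eta
      using K that n dpos unfolding eps_def by blast
    have up: "S n \<le> K * eps n" unfolding S_def by (rule cSUP_least[OF ne each])
    obtain eta0 where e0: "eta0 \<in> Omega (Ls n) (Ns n)" using ne by blast
    have bdd: "bdd_above ((\<lambda>eta. \<bar>gen (Ls n) (d (Ls n)) (\<lambda>\<xi>. Hrep R (emp (Ls n) (Ns n) \<xi>)) eta
               - Ltheta \<theta> R (emp (Ls n) (Ns n) eta)\<bar>) ` Omega (Ls n) (Ns n))"
      using each by (intro bdd_aboveI2) blast
    have "0 \<le> \<bar>gen (Ls n) (d (Ls n)) (\<lambda>\<xi>. Hrep R (emp (Ls n) (Ns n) \<xi>)) eta0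
               - Ltheta \<theta> R (emp (Ls n) (Ns n) eta0)\<bar>" by simp
    also have "\<dots> \<le> S n" unfolding S_def by (rule cSUP_upper[OF e0 bdd])
    finally show ?thesis using up by simp
  qed
  have "S \<longlonglongrightarrow> 0"
  proof (rule tendsto_sandwich[of "\<lambda>n. 0" S sequentially "\<lambda>n. K * eps n"])
    show "eventually (\<lambda>n. 0 \<le> S n) sequentially" using ev by eventually_elim (use bounds in blast)
    show "eventually (\<lambda>n. S n \<le> K * eps n) sequentially" using ev by eventually_elim (use bounds in blast)
  qed (use Keps in auto)
  then show "(\<lambda>n. SUP eta \<in> Omega (Ls n) (Ns n).
              \<bar>gen (Ls n) (d (Ls n)) (\<lambda>\<xi>. Hrep R (emp (Ls n) (Ns n) \<xi>)) eta
               - Ltheta \<theta> R (emp (Ls n) (Ns n) eta)\<bar>) \<longlonglongrightarrow> 0"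
    unfolding S_def .
qed


end
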